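(* The group $G_{sm}=H_9\times S_{sm}$ has exactly three orbits on the set of semi-magic Sudoku boards.
   Context: A Sudoku board is a $9\times 9$ array with entries from $\{0,\dots,8\}$ such that every row, every column and every one of the nine $3\times 3$ blocks contains each symbol exactly once. A semi-magic Sudoku board is a Sudoku board in which, in every block, each of the three rows and each of the three columns of the block has entry sum $12$. $H_9$ is the group of cell rearrangements (acting on boards by moving entries) generated by permutations of the three bands (horizontal strips of blocks), permutations of the rows within a band, permutations of the three pillars (vertical strips of blocks), permutations of the columns within a pillar, and the transpose. A relabeling is a permutation of the symbols $\{0,\dots,8\}$ applied to every entry; $S_{sm}$ is the group of relabelings that map every semi-magic Sudoku board to a semi-magic Sudoku board (it has order $72$). *)

theory Defs
  imports "HOL-Combinatorics.Permutations"
begin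

text \<open>Cells of a 9x9 board: pairs (row, column) with 0 <= row, column < 9.
  A board is a function from cells to symbols; by convention it is 0 outside the cells.\<close>

definition cells :: "(nat \<times> nat) set" where
  "cells = {0..<9} \<times> {0..<9}"

definition sudoku :: "(nat \<times> nat \<Rightarrow> nat) \<Rightarrow> bool" where
  "sudoku B \<longleftrightarrow>
     (\<forall>c. c \<notin> cells \<longrightarrow> B c = 0) \<and>
     (\<forall>i<9. (\<lambda>j. B (i, j)) ` {0..<9} = {0..<9}) \<and>
     (\<forall>j<9. (\<lambda>i. B (i, j)) ` {0..<9} = {0..<9}) \<and>
     (\<forall>bi<3. \<forall>bj<3. (\<lambda>(r, c). B (3 * bi + r, 3 * bj + c)) ` ({0..<3} \<times> {0..<3}) = {0..<9})"

definition semimagic :: "(nat \<times> nat \<Rightarrow> nat) \<Rightarrow> bool" where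
  "semimagic B \<longleftrightarrow> sudoku B \<and>
     (\<forall>bi<3. \<forall>bj<3. \<forall>r<3. (\<Sum>c<3. B (3 * bi + r, 3 * bj + c)) = 12) \<and>
     (\<forall>bi<3. \<forall>bj<3. \<forall>c<3. (\<Sum>r<3. B (3 * bi + r, 3 * bj + c)) = 12)"

definition band_perm :: "(nat \<Rightarrow> nat) \<Rightarrow> nat \<times> nat \<Rightarrow> nat \<times> nat" where
  "band_perm p = (\<lambda>(i, j). if (i, j) \<in> cells then (3 * p (i div 3) + i mod 3, j) else (i, j))"

definition row_perm :: "nat \<Rightarrow> (nat \<Rightarrow> nat) \<Rightarrow> nat \<times> nat \<Rightarrow> nat \<times> nat" where
  "row_perm b q = (\<lambda>(i, j). if (i, j) \<in> cells \<and> i div 3 = b then (3 * b + q (i mod 3), j) else (i, j))"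

definition pillar_perm :: "(nat \<Rightarrow> nat) \<Rightarrow> nat \<times> nat \<Rightarrow> nat \<times> nat" where
  "pillar_perm p = (\<lambda>(i, j). if (i, j) \<in> cells then (i, 3 * p (j div 3) + j mod 3) else (i, j))"

definition col_perm :: "nat \<Rightarrow> (nat \<Rightarrow> nat) \<Rightarrow> nat \<times> nat \<Rightarrow> nat \<times> nat" where
  "col_perm b q = (\<lambda>(i, j). if (i, j) \<in> cells \<and> j div 3 = b then (i, 3 * b + q (j mod 3)) else (i, j))"

definition transpose_cells :: "nat \<times> nat \<Rightarrow> nat \<times> nat" where
  "transpose_cells = (\<lambda>(i, j). (j, i))"

definition H9_gens :: "(nat \<times> nat \<Rightarrow> nat \<times> nat) set" where
  "H9_gens =
     {band_perm p | p. p permutes {0..<3}} \<union>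
     {row_perm b q | b q. b < 3 \<and> q permutes {0..<3}} \<union>
     {pillar_perm p | p. p permutes {0..<3}} \<union>
     {col_perm b q | b q. b < 3 \<and> q permutes {0..<3}} \<union>
     {transpose_cells}"

text \<open>H_9: the group generated by the generators (all permutations of a finite set,
  so the generated monoid is the generated group).\<close>

inductive_set H9 :: "(nat \<times> nat \<Rightarrow> nat \<times> nat) set" where
  H9_id: "id \<in> H9"
| H9_step: "g \<in> H9_gens \<Longrightarrow> h \<in> H9 \<Longrightarrow> g \<circ> h \<in> H9"

definition move :: "(nat \<times> nat \<Rightarrow> nat \<times> nat) \<Rightarrow> (nat \<times> nat \<Rightarrow> nat) \<Rightarrow> (nat \<times> nat \<Rightarrow> nat)" where
  "move \<sigma> B = (\<lambda>c. if c \<in> cells then B (\<sigma> c) else 0)"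

definition relabel :: "(nat \<Rightarrow> nat) \<Rightarrow> (nat \<times> nat \<Rightarrow> nat) \<Rightarrow> (nat \<times> nat \<Rightarrow> nat)" where
  "relabel \<pi> B = (\<lambda>c. if c \<in> cells then \<pi> (B c) else 0)"

definition S_sm :: "(nat \<Rightarrow> nat) set" where
  "S_sm = {\<pi>. \<pi> permutes {0..<9} \<and> (\<forall>B. semimagic B \<longrightarrow> semimagic (relabel \<pi> B))}"

definition G_sm_orbit :: "(nat \<times> nat \<Rightarrow> nat) \<Rightarrow> (nat \<times> nat \<Rightarrow> nat) set" where
  "G_sm_orbit B = {relabel \<pi> (move \<sigma> B) | \<sigma> \<pi>. \<sigma> \<in> H9 \<and> \<pi> \<in> S_sm}"

end

theory Submission
  imports Defs
begin

definition d1 :: "nat \<Rightarrow> nat" where "d1 v = (v mod 3 + 2 * (v div 3)) mod 3"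
definition d2 :: "nat \<Rightarrow> nat" where "d2 v = (v div 3 + v mod 3) mod 3"
definition symb :: "nat \<Rightarrow> nat \<Rightarrow> nat" where
  "symb a b = 3 * ((b + 2 * ((2*a + 2*b) mod 3)) mod 3) + (2*a + 2*b) mod 3"

lemma less9_cases: "(v::nat) < 9 \<Longrightarrow> v = 0 \<or> v = 1 \<or> v = 2 \<or> v = 3 \<or> v = 4 \<or> v = 5 \<or> v = 6 \<or> v = 7 \<or> v = 8"
  by auto
lemma less3_cases: "(v::nat) < 3 \<Longrightarrow> v = 0 \<or> v = 1 \<or> v = 2"
  by auto
lemma sym_lt: "symb a b < 9"
  unfolding symb_def by linarith
lemma sym_d: "a < 3 \<Longrightarrow> b < 3 \<Longrightarrow> d1 (symb a b) = a \<and> d2 (symb a b) = b"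
  apply (drule less3_cases)+ apply (elim disjE) by (simp_all add: symb_def d1_def d2_def)
lemma d_sym: "v < 9 \<Longrightarrow> symb (d1 v) (d2 v) = v"
  apply (drule less9_cases) apply (elim disjE) by (simp_all add: symb_def d1_def d2_def)
lemma d_lt: "d1 v < 3" "d2 v < 3" by (auto simp: d1_def d2_def)

lemma line0: "x < 9 \<Longrightarrow> y < 9 \<Longrightarrow> z < 9 \<Longrightarrow> x \<noteq> y \<Longrightarrow> y \<noteq> z \<Longrightarrow> x \<noteq> z \<Longrightarrow> x + y + z = 12
  \<Longrightarrow> (d1 x = d1 y \<and> d1 x = d1 z) \<or> (d2 x = d2 y \<and> d2 x = d2 z) \<or>
     ((x = 4 \<or> y = 4 \<or> z = 4) \<and> ((x = 3 \<or> y = 3 \<or> z = 3) \<and> (x = 5 \<or> y = 5 \<or> z = 5) \<or> (x = 1 \<or> y = 1 \<or> z = 1) \<and> (x = 7 \<or> y = 7 \<or> z = 7)))"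
  apply (subgoal_tac "z = 12 - x - y")
   apply (drule less9_cases, drule less9_cases)
   apply (elim disjE) 
  by (simp_all add: d1_def d2_def)
lemma excl: "(x::nat) < 9 \<Longrightarrow> y < 9 \<Longrightarrow> z < 9 \<Longrightarrow> x \<noteq> y \<Longrightarrow> y \<noteq> z \<Longrightarrow> x \<noteq> z \<Longrightarrow> x + y + z = 12
  \<Longrightarrow> x \<noteq> 4 \<Longrightarrow> y \<noteq> 4 \<Longrightarrow> z \<noteq> 4 \<Longrightarrow> (x = 3 \<or> y = 3 \<or> z = 3 \<or> x = 5 \<or> y = 5 \<or> z = 5) \<and> (x = 1 \<or> y = 1 \<or> z = 1 \<or> x = 7 \<or> y = 7 \<or> z = 7)"
  apply (subgoal_tac "z = 12 - x - y")
   apply (drule less9_cases, drule less9_cases)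
   apply (elim disjE) 
  by (simp_all)
lemma line2: "x < 9 \<Longrightarrow> y < 9 \<Longrightarrow> z < 9 \<Longrightarrow> x \<noteq> y \<Longrightarrow> y \<noteq> z \<Longrightarrow> x \<noteq> z \<Longrightarrow> x + y + z = 12
  \<Longrightarrow> u < 9 \<Longrightarrow> v < 9 \<Longrightarrow> w < 9 \<Longrightarrow> u \<noteq> v \<Longrightarrow> v \<noteq> w \<Longrightarrow> u \<noteq> w \<Longrightarrow> u + v + w = 12
  \<Longrightarrow> u \<notin> {x,y,z} \<Longrightarrow> v \<notin> {x,y,z} \<Longrightarrow> w \<notin> {x,y,z}
  \<Longrightarrow> (d1 x = d1 y \<and> d1 x = d1 z) \<or> (d2 x = d2 y \<and> d2 x = d2 z)"
  using line0[of x y z] excl[of u v w] by auto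

definition wfb :: "(nat \<times> nat \<Rightarrow> nat) \<Rightarrow> bool" where
  "wfb B \<longleftrightarrow> (\<forall>c. c \<notin> cells \<longrightarrow> B c = 0) \<and> (\<forall>c. B c < 9)"

lemma cells_iff[simp]: "(a, b) \<in> cells \<longleftrightarrow> a < 9 \<and> b < 9"
  by (simp add: cells_def)

lemma move_move: "(\<forall>c\<in>cells. h c \<in> cells) \<Longrightarrow> move h (move g B) = move (g \<circ> h) B"
  by (auto simp: move_def fun_eq_iff)

lemma relabel_relabel: "relabel p (relabel q B) = relabel (p \<circ> q) B"
  by (auto simp: relabel_def fun_eq_iff)

lemma move_relabel: "(\<forall>c\<in>cells. g c \<in> cells) \<Longrightarrow> move g (relabel p B) = relabel p (move g B)"
  by (auto simp: move_def relabel_def fun_eq_iff)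

lemma perm3_lt: "p permutes {0..<3} \<Longrightarrow> x < 3 \<Longrightarrow> p x < (3::nat)"
  using permutes_in_image[of p "{0..<3}" x] by simp

lemma div3_lt: "i < 9 \<Longrightarrow> i div 3 < (3::nat)" by simp

lemma three_form: "k < 3 \<Longrightarrow> r < 3 \<Longrightarrow> 3 * k + r < (9::nat)" by simp

lemma gens_cells: "g \<in> H9_gens \<Longrightarrow> c \<in> cells \<Longrightarrow> g c \<in> cells"
proof -
  assume g: "g \<in> H9_gens" and c: "c \<in> cells"
  obtain i j where ij: "c = (i, j)" "i < 9" "j < 9" using c by (cases c) auto
  have i3: "i div 3 < 3" "i mod 3 < 3" "j div 3 < 3" "j mod 3 < 3" using ij by auto
  show ?thesis using g unfolding H9_gens_def
  proof (elim UnE CollectE exE conjE, goal_cases)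
    case (1 p) then show ?case using ij perm3_lt[OF 1(2) i3(1)] by (simp add: band_perm_def three_form)
  next
    case (2 b q) then show ?case using ij perm3_lt[OF 2(3) i3(2)] by (simp add: row_perm_def three_form)
  next
    case (3 p) then show ?case using ij perm3_lt[OF 3(2) i3(3)] by (simp add: pillar_perm_def three_form)
  next
    case (4 b q) then show ?case using ij perm3_lt[OF 4(3) i3(4)] by (simp add: col_perm_def three_form)
  next
    case 5 then show ?case using ij by (simp add: transpose_cells_def)
  qed
qed

lemma H9_cells: "\<sigma> \<in> H9 \<Longrightarrow> c \<in> cells \<Longrightarrow> \<sigma> c \<in> cells"
  by (induction arbitrary: c rule: H9.induct) (auto simp: gens_cells)

lemma H9_comp: "\<sigma> \<in> H9 \<Longrightarrow> \<tau> \<in> H9 \<Longrightarrow> \<sigma> \<circ> \<tau> \<in> H9"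
  by (induction rule: H9.induct) (auto simp: comp_assoc intro: H9.intros)

lemma gen_H9: "g \<in> H9_gens \<Longrightarrow> g \<in> H9"
  using H9_step[OF _ H9_id] by simp

lemma dm3: "(3 * k + r) div 3 = k" "(3 * k + r) mod 3 = r" if "r < (3::nat)" using that by auto

lemma gens_inv: "g \<in> H9_gens \<Longrightarrow> \<exists>g'\<in>H9_gens. \<forall>c\<in>cells. g (g' c) = c"
proof -
  assume g: "g \<in> H9_gens"
  consider (b) p where "g = band_perm p" "p permutes {0..<3}"
    | (r) b q where "g = row_perm b q" "b < 3" "q permutes {0..<3}"
    | (p) p where "g = pillar_perm p" "p permutes {0..<3}"
    | (c) b q where "g = col_perm b q" "b < 3" "q permutes {0..<3}"
    | (t) "g = transpose_cells"
    using g unfolding H9_gens_def by blast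
  then show ?thesis
  proof cases
    case b
    have m: "band_perm (inv p) \<in> H9_gens" using b permutes_inv unfolding H9_gens_def by blast
    have "\<forall>c\<in>cells. g (band_perm (inv p) c) = c"
    proof
      fix c assume "c \<in> cells"
      then obtain i j where c: "c = (i, j)" "i < 9" "j < 9" by (cases c) auto
      have ip: "inv p (i div 3) < 3" using perm3_lt[OF permutes_inv[OF b(2)]] c by simp
      show "g (band_perm (inv p) c) = c"
        using c ip b by (simp add: band_perm_def dm3 permutes_inverses(1)[OF b(2)] three_form)
    qed
    then show ?thesis using m by blast
  next
    case r
    have m: "row_perm b (inv q) \<in> H9_gens" using r permutes_inv unfolding H9_gens_def by blast
    have "\<forall>c\<in>cells. g (row_perm b (inv q) c) = c"
    proof
      fix c assume "c \<in> cells"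
      then obtain i j where c: "c = (i, j)" "i < 9" "j < 9" by (cases c) auto
      have ip: "inv q (i mod 3) < 3" using perm3_lt[OF permutes_inv[OF r(3)]] by simp
      show "g (row_perm b (inv q) c) = c"
        using c ip r by (auto simp add: row_perm_def dm3 permutes_inverses(1)[OF r(3)] three_form)
    qed
    then show ?thesis using m by blast
  next
    case p
    have m: "pillar_perm (inv p) \<in> H9_gens" using p permutes_inv unfolding H9_gens_def by blast
    have "\<forall>c\<in>cells. g (pillar_perm (inv p) c) = c"
    proof
      fix c assume "c \<in> cells"
      then obtain i j where c: "c = (i, j)" "i < 9" "j < 9" by (cases c) auto
      have ip: "inv p (j div 3) < 3" using perm3_lt[OF permutes_inv[OF p(2)]] c by simp
      show "g (pillar_perm (inv p) c) = c"
        using c ip p by (simp add: pillar_perm_def dm3 permutes_inverses(1)[OF p(2)] three_form)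
    qed
    then show ?thesis using m by blast
  next
    case c
    have m: "col_perm b (inv q) \<in> H9_gens" using c permutes_inv unfolding H9_gens_def by blast
    have "\<forall>x\<in>cells. g (col_perm b (inv q) x) = x"
    proof
      fix x assume "x \<in> cells"
      then obtain i j where x: "x = (i, j)" "i < 9" "j < 9" by (cases x) auto
      have ip: "inv q (j mod 3) < 3" using perm3_lt[OF permutes_inv[OF c(3)]] by simp
      show "g (col_perm b (inv q) x) = x"
        using x ip c by (auto simp add: col_perm_def dm3 permutes_inverses(1)[OF c(3)] three_form)
    qed
    then show ?thesis using m by blast
  next
    case t
    then show ?thesis by (intro bexI[of _ transpose_cells]) (auto simp: transpose_cells_def H9_gens_def)
  qed
qed

lemma H9_inv: "\<sigma> \<in> H9 \<Longrightarrow> \<exists>\<sigma>'\<in>H9. \<forall>c\<in>cells. \<sigma> (\<sigma>' c) = c"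
proof (induction rule: H9.induct)
  case H9_id
  show ?case by (intro bexI[of _ id] H9.H9_id) auto
next
  case (H9_step g h)
  obtain h' where h': "h' \<in> H9" "\<forall>c\<in>cells. h (h' c) = c" using H9_step by auto
  obtain g' where g': "g' \<in> H9_gens" "\<forall>c\<in>cells. g (g' c) = c" using gens_inv[OF H9_step(1)] by auto
  show ?case
  proof (rule bexI[of _ "h' \<circ> g'"])
    show "h' \<circ> g' \<in> H9" using H9_comp[OF h'(1) gen_H9[OF g'(1)]] .
    show "\<forall>c\<in>cells. (g \<circ> h) ((h' \<circ> g') c) = c"
      using h' g' gens_cells[OF g'(1)] by auto
  qed
qed

definition isline :: "nat \<Rightarrow> nat \<Rightarrow> nat \<Rightarrow> bool" where
  "isline x y z \<longleftrightarrow> (d1 x = d1 y \<and> d1 x = d1 z) \<or> (d2 x = d2 y \<and> d2 x = d2 z)"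


lemma sum3: "(\<Sum>c<3. (f::nat\<Rightarrow>nat) c) = f 0 + f 1 + f 2"
  by (simp add: eval_nat_numeral)

lemma sudD1: "sudoku B \<Longrightarrow> c \<notin> cells \<Longrightarrow> B c = 0"
  unfolding sudoku_def by (cases c) (simp del: cells_iff)
lemma sudD2: "sudoku B \<Longrightarrow> i < 9 \<Longrightarrow> (\<lambda>j. B (i,j)) ` {0..<9} = {0..<9}"
  unfolding sudoku_def by (simp del: cells_iff)
lemma sudD3: "sudoku B \<Longrightarrow> j < 9 \<Longrightarrow> (\<lambda>i. B (i,j)) ` {0..<9} = {0..<9}"
  unfolding sudoku_def by (simp del: cells_iff)
lemma sudD4: "sudoku B \<Longrightarrow> bi < 3 \<Longrightarrow> bj < 3 \<Longrightarrow> (\<lambda>(r, c). B (3 * bi + r, 3 * bj + c)) ` ({0..<3} \<times> {0..<3}) = {0..<9}"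
  unfolding sudoku_def by (simp del: cells_iff)

lemma sud_out: "sudoku B \<Longrightarrow> c \<notin> cells \<Longrightarrow> B c = 0"
  by (rule sudD1)

lemma sud_vals: "sudoku B \<Longrightarrow> B c < 9"
proof -
  assume s: "sudoku B"
  show ?thesis
  proof (cases "c \<in> cells")
    case True
    then obtain i j where c: "c = (i,j)" "i < 9" "j < 9" by (cases c) auto
    have "B (i,j) \<in> (\<lambda>j. B (i, j)) ` {0..<9}" using c by auto
    moreover have "(\<lambda>j. B (i, j)) ` {0..<9} = {0..<9}" using sudD2[OF s c(2)] .
    ultimately show ?thesis using c by auto
  next
    case False then show ?thesis using sud_out[OF s] by simp
  qed
qed

lemma sud_wf: "sudoku B \<Longrightarrow> wfb B"
  using sud_vals sud_out unfolding wfb_def by blast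

lemma img_inj: "f ` A = B \<Longrightarrow> finite A \<Longrightarrow> card A = card B \<Longrightarrow> inj_on f A"
  by (metis eq_card_imp_inj_on)

lemma sud_row_inj: "sudoku B \<Longrightarrow> i < 9 \<Longrightarrow> j < 9 \<Longrightarrow> j' < 9 \<Longrightarrow> B (i,j) = B (i,j') \<Longrightarrow> j = j'"
proof -
  assume s: "sudoku B" and h: "i < 9" "j < 9" "j' < 9" "B (i,j) = B (i,j')"
  have "(\<lambda>j. B (i, j)) ` {0..<9} = {0..<9}" using sudD2[OF s h(1)] .
  then have "inj_on (\<lambda>j. B (i, j)) {0..<9}" by (rule img_inj) auto
  then show ?thesis using h by (auto dest: inj_onD)
qed

lemma sud_col_inj: "sudoku B \<Longrightarrow> j < 9 \<Longrightarrow> i < 9 \<Longrightarrow> i' < 9 \<Longrightarrow> B (i,j) = B (i',j) \<Longrightarrow> i = i'"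
proof -
  assume s: "sudoku B" and h: "j < 9" "i < 9" "i' < 9" "B (i,j) = B (i',j)"
  have "(\<lambda>i. B (i, j)) ` {0..<9} = {0..<9}" using sudD3[OF s h(1)] .
  then have "inj_on (\<lambda>i. B (i, j)) {0..<9}" by (rule img_inj) auto
  then show ?thesis using h by (auto dest: inj_onD)
qed

lemma sud_blk_inj: "sudoku B \<Longrightarrow> bi < 3 \<Longrightarrow> bj < 3 \<Longrightarrow> r < 3 \<Longrightarrow> c < 3 \<Longrightarrow> r' < 3 \<Longrightarrow> c' < 3
  \<Longrightarrow> B (3*bi+r, 3*bj+c) = B (3*bi+r', 3*bj+c') \<Longrightarrow> r = r' \<and> c = c'"
proof -
  assume s: "sudoku B" and h: "bi < 3" "bj < 3" "r < 3" "c < 3" "r' < 3" "c' < 3"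
    "B (3*bi+r, 3*bj+c) = B (3*bi+r', 3*bj+c')"
  have "(\<lambda>(r, c). B (3 * bi + r, 3 * bj + c)) ` ({0..<3} \<times> {0..<3}) = {0..<9}" using sudD4[OF s h(1,2)] .
  then have "inj_on (\<lambda>(r, c). B (3 * bi + r, 3 * bj + c)) ({0..<3} \<times> {0..<3})" by (rule img_inj) auto
  then have "(r, c) = (r', c')" by (rule inj_onD) (use h in auto)
  then show ?thesis by simp
qed

lemma blk_ne: "sudoku B \<Longrightarrow> bi < 3 \<Longrightarrow> bj < 3 \<Longrightarrow> r < 3 \<Longrightarrow> c < 3 \<Longrightarrow> r' < 3 \<Longrightarrow> c' < 3
  \<Longrightarrow> (r, c) \<noteq> (r', c') \<Longrightarrow> B (3*bi+r, 3*bj+c) \<noteq> B (3*bi+r', 3*bj+c')"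
  using sud_blk_inj by blast

lemma wfD: "wfb B \<Longrightarrow> B c < 9" unfolding wfb_def by blast
lemma wfD2: "wfb B \<Longrightarrow> c \<notin> cells \<Longrightarrow> B c = 0" unfolding wfb_def by blast

lemma relabel_id: "sudoku B \<Longrightarrow> relabel id B = B"
  by (auto simp: relabel_def fun_eq_iff sud_out)

lemma id_S_sm: "id \<in> S_sm"
  unfolding S_sm_def by (auto simp: relabel_id semimagic_def)

lemma comp_S_sm: "p \<in> S_sm \<Longrightarrow> q \<in> S_sm \<Longrightarrow> p \<circ> q \<in> S_sm"
  unfolding S_sm_def by (auto simp: permutes_compose relabel_relabel[symmetric])

lemma blk_row_line: assumes sm: "semimagic B" and h: "bi < 3" "bj < 3" "r < 3"
  shows "isline (B (3*bi+r, 3*bj+0)) (B (3*bi+r, 3*bj+1)) (B (3*bi+r, 3*bj+2))"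
proof -
  have s: "sudoku B" using sm by (simp add: semimagic_def)
  define r' where "r' = (if r = 0 then 1 else (0::nat))"
  have r': "r' < 3" "r' \<noteq> r" by (auto simp: r'_def)
  have sum: "B (3*bi+k, 3*bj+0) + B (3*bi+k, 3*bj+1) + B (3*bi+k, 3*bj+2) = 12" if "k < 3" for k
  proof -
    have "(\<Sum>c<3. B (3 * bi + k, 3 * bj + c)) = 12" using sm h that by (simp add: semimagic_def)
    then show ?thesis by (simp add: sum3)
  qed
  have ne: "B (3*bi+k, 3*bj+c) \<noteq> B (3*bi+k', 3*bj+c')" if "k<3" "k'<3" "c<3" "c'<3" "(k,c) \<noteq> (k',c')" for k k' c c'
    using blk_ne[OF s h(1,2) that(1,3,2,4,5)] .
  show ?thesis unfolding isline_def
    apply (rule line2[OF sud_vals[OF s] sud_vals[OF s] sud_vals[OF s] _ _ _ sum[OF h(3)]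
          sud_vals[OF s] sud_vals[OF s] sud_vals[OF s] _ _ _ sum[OF r'(1)]])
    subgoal using ne[of r r 0 1] h(3) r'(1) r'(2) by auto
    subgoal using ne[of r r 1 2] h(3) r'(1) r'(2) by auto
    subgoal using ne[of r r 0 2] h(3) r'(1) r'(2) by auto
    subgoal using ne[of r' r' 0 1] h(3) r'(1) r'(2) by auto
    subgoal using ne[of r' r' 1 2] h(3) r'(1) r'(2) by auto
    subgoal using ne[of r' r' 0 2] h(3) r'(1) r'(2) by auto
    subgoal using ne[of r' r 0 0] ne[of r' r 0 1] ne[of r' r 0 2] h(3) r'(1) r'(2) by auto
    subgoal using ne[of r' r 1 0] ne[of r' r 1 1] ne[of r' r 1 2] h(3) r'(1) r'(2) by auto
    subgoal using ne[of r' r 2 0] ne[of r' r 2 1] ne[of r' r 2 2] h(3) r'(1) r'(2) by auto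
    done
qed

lemma blk_col_line: assumes sm: "semimagic B" and h: "bi < 3" "bj < 3" "c < 3"
  shows "isline (B (3*bi+0, 3*bj+c)) (B (3*bi+1, 3*bj+c)) (B (3*bi+2, 3*bj+c))"
proof -
  have s: "sudoku B" using sm by (simp add: semimagic_def)
  define c' where "c' = (if c = 0 then 1 else (0::nat))"
  have c': "c' < 3" "c' \<noteq> c" by (auto simp: c'_def)
  have sum: "B (3*bi+0, 3*bj+k) + B (3*bi+1, 3*bj+k) + B (3*bi+2, 3*bj+k) = 12" if "k < 3" for k
  proof -
    have "(\<Sum>r<3. B (3 * bi + r, 3 * bj + k)) = 12" using sm h that by (simp add: semimagic_def)
    then show ?thesis by (simp add: sum3)
  qed
  have ne: "B (3*bi+k, 3*bj+m) \<noteq> B (3*bi+k', 3*bj+m')" if "k<3" "k'<3" "m<3" "m'<3" "(k,m) \<noteq> (k',m')" for k k' m m'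
    using blk_ne[OF s h(1,2) that(1,3,2,4,5)] .
  show ?thesis unfolding isline_def
    apply (rule line2[OF sud_vals[OF s] sud_vals[OF s] sud_vals[OF s] _ _ _ sum[OF h(3)]
          sud_vals[OF s] sud_vals[OF s] sud_vals[OF s] _ _ _ sum[OF c'(1)]])
    subgoal using ne[of 0 1 c c] h(3) c'(1) c'(2) by auto
    subgoal using ne[of 1 2 c c] h(3) c'(1) c'(2) by auto
    subgoal using ne[of 0 2 c c] h(3) c'(1) c'(2) by auto
    subgoal using ne[of 0 1 c' c'] h(3) c'(1) c'(2) by auto
    subgoal using ne[of 1 2 c' c'] h(3) c'(1) c'(2) by auto
    subgoal using ne[of 0 2 c' c'] h(3) c'(1) c'(2) by auto
    subgoal using ne[of 0 0 c' c] ne[of 0 1 c' c] ne[of 0 2 c' c] h(3) c'(1) c'(2) by auto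
    subgoal using ne[of 1 0 c' c] ne[of 1 1 c' c] ne[of 1 2 c' c] h(3) c'(1) c'(2) by auto
    subgoal using ne[of 2 0 c' c] ne[of 2 1 c' c] ne[of 2 2 c' c] h(3) c'(1) c'(2) by auto
    done
qed

lemma S_sm_I:
  assumes p: "\<pi> permutes {0..<9}"
    and tr: "\<And>x y z. x < 9 \<Longrightarrow> y < 9 \<Longrightarrow> z < 9 \<Longrightarrow> x \<noteq> y \<Longrightarrow> y \<noteq> z \<Longrightarrow> x \<noteq> z \<Longrightarrow> x + y + z = 12
        \<Longrightarrow> isline x y z \<Longrightarrow> \<pi> x + \<pi> y + \<pi> z = 12"
  shows "\<pi> \<in> S_sm"
  unfolding S_sm_def
proof (intro CollectI conjI p allI impI)
  fix B assume sm: "semimagic B"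
  have s: "sudoku B" using sm by (simp add: semimagic_def)
  let ?B = "relabel \<pi> B"
  have img: "\<pi> ` {0..<9} = {0..<9}" using permutes_image[OF p] .
  have sud: "sudoku ?B"
    unfolding sudoku_def
  proof (intro conjI allI impI)
    fix c assume "c \<notin> cells" then show "?B c = 0" by (simp add: relabel_def)
  next
    fix i :: nat assume i: "i < 9"
    have "(\<lambda>j. ?B (i, j)) ` {0..<9} = \<pi> ` ((\<lambda>j. B (i, j)) ` {0..<9})"
      using i by (auto simp: relabel_def image_image)
    also have "\<dots> = {0..<9}" using sudD2[OF s i] img by simp
    finally show "(\<lambda>j. ?B (i, j)) ` {0..<9} = {0..<9}" .
  next
    fix j :: nat assume j: "j < 9"
    have "(\<lambda>i. ?B (i, j)) ` {0..<9} = \<pi> ` ((\<lambda>i. B (i, j)) ` {0..<9})"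
      using j by (auto simp: relabel_def image_image)
    also have "\<dots> = {0..<9}" using sudD3[OF s j] img by simp
    finally show "(\<lambda>i. ?B (i, j)) ` {0..<9} = {0..<9}" .
  next
    fix bi bj :: nat assume b: "bi < 3" "bj < 3"
    have "(\<lambda>(r, c). ?B (3 * bi + r, 3 * bj + c)) ` ({0..<3} \<times> {0..<3})
        = \<pi> ` ((\<lambda>(r, c). B (3 * bi + r, 3 * bj + c)) ` ({0..<3} \<times> {0..<3}))"
      using b by (force simp: relabel_def image_image)
    also have "\<dots> = {0..<9}" using sudD4[OF s b] img by simp
    finally show "(\<lambda>(r, c). ?B (3 * bi + r, 3 * bj + c)) ` ({0..<3} \<times> {0..<3}) = {0..<9}" .
  qed
  have rows: "(\<Sum>c<3. ?B (3 * bi + r, 3 * bj + c)) = 12" if h: "bi < 3" "bj < 3" "r < 3" for bi bj r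
  proof -
    let ?x = "B (3 * bi + r, 3 * bj + 0)" and ?y = "B (3 * bi + r, 3 * bj + 1)" and ?z = "B (3 * bi + r, 3 * bj + 2)"
    have "(\<Sum>c<3. B (3 * bi + r, 3 * bj + c)) = 12" using sm h by (simp add: semimagic_def)
    then have e: "?x + ?y + ?z = 12" by (simp add: sum3)
    have d: "?x \<noteq> ?y" "?y \<noteq> ?z" "?x \<noteq> ?z"
      using blk_ne[OF s h(1,2) h(3) _ h(3), of 0 1] blk_ne[OF s h(1,2) h(3) _ h(3), of 1 2]
        blk_ne[OF s h(1,2) h(3) _ h(3), of 0 2] by auto
    have "\<pi> ?x + \<pi> ?y + \<pi> ?z = 12"
      by (rule tr[OF sud_vals[OF s] sud_vals[OF s] sud_vals[OF s] d e]) (use blk_row_line[OF sm h] in simp)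
    then show ?thesis using h by (simp add: sum3 relabel_def)
  qed
  have cols: "(\<Sum>r<3. ?B (3 * bi + r, 3 * bj + c)) = 12" if h: "bi < 3" "bj < 3" "c < 3" for bi bj c
  proof -
    let ?x = "B (3 * bi + 0, 3 * bj + c)" and ?y = "B (3 * bi + 1, 3 * bj + c)" and ?z = "B (3 * bi + 2, 3 * bj + c)"
    have "(\<Sum>r<3. B (3 * bi + r, 3 * bj + c)) = 12" using sm h by (simp add: semimagic_def)
    then have e: "?x + ?y + ?z = 12" by (simp add: sum3)
    have d: "?x \<noteq> ?y" "?y \<noteq> ?z" "?x \<noteq> ?z"
      using blk_ne[OF s h(1,2) _ h(3) _ h(3), of 0 1] blk_ne[OF s h(1,2) _ h(3) _ h(3), of 1 2]
        blk_ne[OF s h(1,2) _ h(3) _ h(3), of 0 2] by auto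
    have "\<pi> ?x + \<pi> ?y + \<pi> ?z = 12"
      by (rule tr[OF sud_vals[OF s] sud_vals[OF s] sud_vals[OF s] d e]) (use blk_col_line[OF sm h] in simp)
    then show ?thesis using h by (simp add: sum3 relabel_def)
  qed
  show "semimagic ?B" unfolding semimagic_def using sud rows cols by blast
qed

lemma orbit_eq:
  assumes wfb: "wfb B" and s0: "\<sigma>0 \<in> H9" and p0: "\<pi>0 \<in> S_sm" and p0': "\<pi>0' \<in> S_sm"
    and inv: "\<And>v. v < 9 \<Longrightarrow> \<pi>0' (\<pi>0 v) = v"
  shows "G_sm_orbit (relabel \<pi>0 (move \<sigma>0 B)) = G_sm_orbit B"
proof
  show "G_sm_orbit (relabel \<pi>0 (move \<sigma>0 B)) \<subseteq> G_sm_orbit B"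
  proof
    fix x assume "x \<in> G_sm_orbit (relabel \<pi>0 (move \<sigma>0 B))"
    then obtain \<sigma> \<pi> where x: "x = relabel \<pi> (move \<sigma> (relabel \<pi>0 (move \<sigma>0 B)))" "\<sigma> \<in> H9" "\<pi> \<in> S_sm"
      unfolding G_sm_orbit_def by blast
    have c: "\<forall>c\<in>cells. \<sigma> c \<in> cells" using H9_cells[OF x(2)] by blast
    have "x = relabel (\<pi> \<circ> \<pi>0) (move (\<sigma>0 \<circ> \<sigma>) B)"
      using x(1) by (simp add: move_relabel[OF c] relabel_relabel move_move[OF c])
    then show "x \<in> G_sm_orbit B" unfolding G_sm_orbit_def
      using H9_comp[OF s0 x(2)] comp_S_sm[OF x(3) p0] by blast
  qed
next
  show "G_sm_orbit B \<subseteq> G_sm_orbit (relabel \<pi>0 (move \<sigma>0 B))"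
  proof
    fix x assume "x \<in> G_sm_orbit B"
    then obtain \<sigma> \<pi> where x: "x = relabel \<pi> (move \<sigma> B)" "\<sigma> \<in> H9" "\<pi> \<in> S_sm"
      unfolding G_sm_orbit_def by blast
    obtain \<sigma>' where s': "\<sigma>' \<in> H9" "\<forall>c\<in>cells. \<sigma>0 (\<sigma>' c) = c" using H9_inv[OF s0] by blast
    have "x = relabel (\<pi> \<circ> \<pi>0') (move (\<sigma>' \<circ> \<sigma>) (relabel \<pi>0 (move \<sigma>0 B)))"
    proof
      fix c
      show "x c = relabel (\<pi> \<circ> \<pi>0') (move (\<sigma>' \<circ> \<sigma>) (relabel \<pi>0 (move \<sigma>0 B))) c"
      proof (cases "c \<in> cells")
        case True
        have c1: "\<sigma> c \<in> cells" using H9_cells[OF x(2) True] .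
        have c2: "\<sigma>' (\<sigma> c) \<in> cells" using H9_cells[OF s'(1) c1] .
        have "B (\<sigma> c) < 9" using wfD[OF wfb] .
        then show ?thesis using True c1 c2 s'(2) x(1) inv
          by (simp add: relabel_def move_def)
      next
        case False then show ?thesis using x(1) by (simp add: relabel_def)
      qed
    qed
    then show "x \<in> G_sm_orbit (relabel \<pi>0 (move \<sigma>0 B))" unfolding G_sm_orbit_def
      using H9_comp[OF s'(1) x(2)] comp_S_sm[OF x(3) p0'] by blast
  qed
qed

lemma orbit_move: "wfb B \<Longrightarrow> \<sigma> \<in> H9 \<Longrightarrow> G_sm_orbit (move \<sigma> B) = G_sm_orbit B"
proof -
  assume "wfb B" "\<sigma> \<in> H9"
  moreover have "wfb (move \<sigma> B)" using wfD[OF \<open>wfb B\<close>] unfolding wfb_def move_def by auto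
  ultimately have "G_sm_orbit (relabel id (move \<sigma> B)) = G_sm_orbit B"
    by (intro orbit_eq[OF _ _ id_S_sm id_S_sm]) auto
  moreover have "relabel id (move \<sigma> B) = move \<sigma> B" by (auto simp: relabel_def move_def fun_eq_iff)
  ultimately show ?thesis by simp
qed

lemma orbit_relabel: "wfb B \<Longrightarrow> \<pi> \<in> S_sm \<Longrightarrow> (\<And>v. v < 9 \<Longrightarrow> \<pi> (\<pi> v) = v) \<Longrightarrow> G_sm_orbit (relabel \<pi> B) = G_sm_orbit B"
proof -
  assume a: "wfb B" "\<pi> \<in> S_sm" "\<And>v. v < 9 \<Longrightarrow> \<pi> (\<pi> v) = v"
  have "G_sm_orbit (relabel \<pi> (move id B)) = G_sm_orbit B"
    by (rule orbit_eq[OF a(1) H9_id a(2) a(2) a(3)])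
  moreover have "move id B = B" using wfD2[OF a(1)] by (auto simp: move_def fun_eq_iff)
  ultimately show ?thesis by simp
qed

definition swp :: "nat \<Rightarrow> nat" where "swp v = (if v < 9 then symb (d2 v) (d1 v) else v)"

lemma swp_sym: "a < 3 \<Longrightarrow> b < 3 \<Longrightarrow> swp (symb a b) = symb b a"
  using sym_lt[of a b] sym_d[of a b] by (simp add: swp_def)

lemma swp_inv: "v < 9 \<Longrightarrow> swp (swp v) = v"
  using swp_sym[of "d2 v" "d1 v"] d_sym[of v] d_lt[of v] by (simp add: swp_def)

lemma swp_lt: "v < 9 \<Longrightarrow> swp v < 9" by (simp add: swp_def sym_lt)

lemma swp_tr: "(x::nat) < 9 \<Longrightarrow> y < 9 \<Longrightarrow> z < 9 \<Longrightarrow> x \<noteq> y \<Longrightarrow> y \<noteq> z \<Longrightarrow> x \<noteq> z \<Longrightarrow> x + y + z = 12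
  \<Longrightarrow> isline x y z \<Longrightarrow> swp x + swp y + swp z = 12"
  apply (subgoal_tac "z = 12 - x - y")
   apply (drule less9_cases, drule less9_cases)
   apply (elim disjE) 
  by (simp_all add: swp_def symb_def d1_def d2_def isline_def)

lemma swp_perm: "swp permutes {0..<9}"
proof (rule bij_imp_permutes)
  show "bij_betw swp {0..<9} {0..<9}"
    by (rule bij_betw_byWitness[of _ swp]) (auto simp: swp_inv swp_lt)
  show "\<And>x. x \<notin> {0..<9} \<Longrightarrow> swp x = x" by (simp add: swp_def)
qed

lemma swp_S_sm: "swp \<in> S_sm"
  by (rule S_sm_I[OF swp_perm swp_tr])

definition board :: "(nat \<Rightarrow> nat \<Rightarrow> nat) \<Rightarrow> (nat \<Rightarrow> nat \<Rightarrow> nat) \<Rightarrow> nat \<times> nat \<Rightarrow> nat" where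
  "board R C = (\<lambda>(i, j). if i < 9 \<and> j < 9 then symb (R i (j div 3) mod 3) (C (i div 3) j mod 3) else 0)"

lemma wf_board: "wfb (board R C)"
  unfolding wfb_def board_def by (auto simp: sym_lt)

lemma board_cong: "(\<And>i p. i < 9 \<Longrightarrow> p < 3 \<Longrightarrow> R i p = R' i p) \<Longrightarrow> (\<And>b j. b < 3 \<Longrightarrow> j < 9 \<Longrightarrow> C b j = C' b j)
  \<Longrightarrow> board R C = board R' C'"
  unfolding board_def by (auto simp: fun_eq_iff)

definition rowp :: "nat \<Rightarrow> (nat \<Rightarrow> nat) \<Rightarrow> (nat \<Rightarrow> nat \<Rightarrow> nat) \<Rightarrow> nat \<Rightarrow> nat \<Rightarrow> nat" where
  "rowp b q R = (\<lambda>i p. if i div 3 = b then R (3 * b + q (i mod 3)) p else R i p)"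

definition colp :: "nat \<Rightarrow> (nat \<Rightarrow> nat) \<Rightarrow> (nat \<Rightarrow> nat \<Rightarrow> nat) \<Rightarrow> nat \<Rightarrow> nat \<Rightarrow> nat" where
  "colp b q C = (\<lambda>b' j. if j div 3 = b then C b' (3 * b + q (j mod 3)) else C b' j)"

lemma move_row: assumes "b < 3" "q permutes {0..<3}"
  shows "move (row_perm b q) (board R C) = board (rowp b q R) C"
proof (rule ext)
  fix x :: "nat \<times> nat"
  obtain i j where x: "x = (i, j)" by (cases x)
  have q: "q (i mod 3) < 3" using perm3_lt[OF assms(2)] by simp
  show "move (row_perm b q) (board R C) x = board (rowp b q R) C x"
    using q assms(1) by (auto simp: x move_def board_def row_perm_def rowp_def dm3 three_form)
qed

lemma move_col: assumes "b < 3" "q permutes {0..<3}"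
  shows "move (col_perm b q) (board R C) = board R (colp b q C)"
proof (rule ext)
  fix x :: "nat \<times> nat"
  obtain i j where x: "x = (i, j)" by (cases x)
  have q: "q (j mod 3) < 3" using perm3_lt[OF assms(2)] by simp
  show "move (col_perm b q) (board R C) x = board R (colp b q C) x"
    using q assms(1) by (auto simp: x move_def board_def col_perm_def colp_def dm3 three_form)
qed

lemma move_band: assumes "P permutes {0..<3}"
  shows "move (band_perm P) (board R C) = board (\<lambda>i p. R (3 * P (i div 3) + i mod 3) p) (\<lambda>b j. C (P b) j)"
proof (rule ext)
  fix x :: "nat \<times> nat"
  obtain i j where x: "x = (i, j)" by (cases x)
  show "move (band_perm P) (board R C) x = board (\<lambda>i p. R (3 * P (i div 3) + i mod 3) p) (\<lambda>b j. C (P b) j) x"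
  proof (cases "i < 9")
    case True
    have q: "P (i div 3) < 3" using perm3_lt[OF assms] True by simp
    show ?thesis using q by (auto simp: x move_def board_def band_perm_def dm3 three_form)
  qed (auto simp: x move_def board_def)
qed

lemma move_trans: "relabel swp (move transpose_cells (board R C)) = board (\<lambda>i p. C p i) (\<lambda>b j. R j b)"
  by (auto simp: fun_eq_iff relabel_def move_def board_def transpose_cells_def swp_sym)

lemma trans_H9: "transpose_cells \<in> H9"
  by (rule gen_H9) (simp add: H9_gens_def)
lemma band_H9: "P permutes {0..<3} \<Longrightarrow> band_perm P \<in> H9"
  by (rule gen_H9) (auto simp: H9_gens_def)
lemma row_H9: "b < 3 \<Longrightarrow> q permutes {0..<3} \<Longrightarrow> row_perm b q \<in> H9"
  by (rule gen_H9) (auto simp: H9_gens_def)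
lemma col_H9: "b < 3 \<Longrightarrow> q permutes {0..<3} \<Longrightarrow> col_perm b q \<in> H9"
  by (rule gen_H9) (auto simp: H9_gens_def)

definition Ob :: "(nat \<Rightarrow> nat \<Rightarrow> nat) \<Rightarrow> (nat \<Rightarrow> nat \<Rightarrow> nat) \<Rightarrow> (nat \<times> nat \<Rightarrow> nat) set" where
  "Ob R C = G_sm_orbit (board R C)"

lemma Ob_trans: "Ob R C = Ob (\<lambda>i p. C p i) (\<lambda>b j. R j b)"
proof -
  have "G_sm_orbit (relabel swp (move transpose_cells (board R C))) = G_sm_orbit (board R C)"
    by (rule orbit_eq[OF wf_board trans_H9 swp_S_sm swp_S_sm swp_inv])
  then show ?thesis unfolding Ob_def move_trans by simp
qed

lemma Ob_row: "b < 3 \<Longrightarrow> q permutes {0..<3} \<Longrightarrow> Ob R C = Ob (rowp b q R) C"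
  unfolding Ob_def using orbit_move[OF wf_board row_H9, of b q R C] move_row[of b q R C] by simp

lemma Ob_col: "b < 3 \<Longrightarrow> q permutes {0..<3} \<Longrightarrow> Ob R C = Ob R (colp b q C)"
  unfolding Ob_def using orbit_move[OF wf_board col_H9, of b q R C] move_col[of b q R C] by simp

lemma Ob_band: "P permutes {0..<3} \<Longrightarrow> Ob R C = Ob (\<lambda>i p. R (3 * P (i div 3) + i mod 3) p) (\<lambda>b j. C (P b) j)"
  unfolding Ob_def using orbit_move[OF wf_board band_H9, of P R C] move_band[of P R C] by simp

lemma Ob_cong: "(\<And>i p. i < 9 \<Longrightarrow> p < 3 \<Longrightarrow> R i p = R' i p) \<Longrightarrow> (\<And>b j. b < 3 \<Longrightarrow> j < 9 \<Longrightarrow> C b j = C' b j)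
  \<Longrightarrow> Ob R C = Ob R' C'"
  unfolding Ob_def using board_cong by metis

lemma all3: "(\<forall>x<3. P x) \<longleftrightarrow> P 0 \<and> P 1 \<and> P (2::nat)"
proof
  assume h: "P 0 \<and> P 1 \<and> P 2"
  show "\<forall>x<3. P x"
  proof (intro allI impI)
    fix x :: nat assume "x < 3" then show "P x" using less3_cases[of x] h by auto
  qed
qed simp

lemma lat3:
  fixes a1 b1 c1 a2 b2 c2 :: nat
  assumes "a1 < 3" "b1 < 3" "c1 < 3" "a2 < 3" "b2 < 3" "c2 < 3"
    "a1 \<noteq> 0" "a2 \<noteq> 0" "a1 \<noteq> a2" "b1 \<noteq> 1" "b2 \<noteq> 1" "b1 \<noteq> b2" "c1 \<noteq> 2" "c2 \<noteq> 2" "c1 \<noteq> c2"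
    "a1 \<noteq> b1" "b1 \<noteq> c1" "a1 \<noteq> c1" "a2 \<noteq> b2" "b2 \<noteq> c2" "a2 \<noteq> c2"
  shows "(a1 = 1 \<and> b1 = 2 \<and> c1 = 0 \<and> a2 = 2 \<and> b2 = 0 \<and> c2 = 1) \<or> (a1 = 2 \<and> b1 = 0 \<and> c1 = 1 \<and> a2 = 1 \<and> b2 = 2 \<and> c2 = 0)"
  using assms by (auto dest!: less3_cases)

definition LatB :: "(nat \<Rightarrow> nat \<Rightarrow> nat) \<Rightarrow> nat \<Rightarrow> bool" where
  "LatB R b \<longleftrightarrow> (\<forall>r<3. \<forall>p<3. R (3*b+r) p < 3) \<and>
     (\<forall>r<3. \<forall>p<3. \<forall>p'<3. p \<noteq> p' \<longrightarrow> R (3*b+r) p \<noteq> R (3*b+r) p') \<and>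
     (\<forall>r<3. \<forall>r'<3. \<forall>p<3. r \<noteq> r' \<longrightarrow> R (3*b+r) p \<noteq> R (3*b+r') p)"

definition LatR :: "(nat \<Rightarrow> nat \<Rightarrow> nat) \<Rightarrow> bool" where "LatR R \<longleftrightarrow> (\<forall>b<3. LatB R b)"
definition LatC :: "(nat \<Rightarrow> nat \<Rightarrow> nat) \<Rightarrow> bool" where "LatC C \<longleftrightarrow> LatR (\<lambda>i p. C p i)"

lemma perm3I: assumes "\<And>x. x < 3 \<Longrightarrow> f x < 3" "\<And>x y. x < 3 \<Longrightarrow> y < 3 \<Longrightarrow> f x = f y \<Longrightarrow> x = y"
  "\<And>x. x \<ge> 3 \<Longrightarrow> f x = x"
  shows "f permutes {0..<(3::nat)}"
proof (rule bij_imp_permutes)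
  have inj: "inj_on f {0..<3}" using assms(2) by (auto intro: inj_onI)
  have "f ` {0..<3} \<subseteq> {0..<3}" using assms(1) by auto
  then have "f ` {0..<3} = {0..<3}" using endo_inj_surj[OF _ _ inj] by auto
  then show "bij_betw f {0..<3} {0..<3}" using inj by (simp add: bij_betw_def)
  show "\<And>x. x \<notin> {0..<3} \<Longrightarrow> f x = x" using assms(3) by auto
qed

lemma LatB_lt: "LatB R b \<Longrightarrow> r < 3 \<Longrightarrow> p < 3 \<Longrightarrow> R (3*b+r) p < 3"
  unfolding LatB_def by blast
lemma LatB_row: "LatB R b \<Longrightarrow> r < 3 \<Longrightarrow> p < 3 \<Longrightarrow> p' < 3 \<Longrightarrow> p \<noteq> p' \<Longrightarrow> R (3*b+r) p \<noteq> R (3*b+r) p'"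
  unfolding LatB_def by blast
lemma LatB_col: "LatB R b \<Longrightarrow> r < 3 \<Longrightarrow> r' < 3 \<Longrightarrow> p < 3 \<Longrightarrow> r \<noteq> r' \<Longrightarrow> R (3*b+r) p \<noteq> R (3*b+r') p"
  unfolding LatB_def by blast

lemma band_norm: assumes L: "LatB R b"
  shows "\<exists>q s. q permutes {0..<3} \<and> (s = 1 \<or> s = 2) \<and> (\<forall>r<3. \<forall>p<3. R (3*b + q r) p = (r + s*p) mod 3)"
proof -
  define f where "f = (\<lambda>r. if r < 3 then R (3*b+r) 0 else r)"
  have c0: "x = y" if "x < 3" "y < 3" "R (3*b+x) 0 = R (3*b+y) 0" for x y
    using LatB_col[OF L that(1,2), of 0] that(3) by auto
  have fp: "f permutes {0..<3}"
  proof (rule perm3I)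
    show "f x < 3" if "x < 3" for x using LatB_lt[OF L that, of 0] that by (simp add: f_def)
    show "x = y" if "x < 3" "y < 3" "f x = f y" for x y using c0[OF that(1,2)] that by (simp add: f_def)
    show "f x = x" if "3 \<le> x" for x using that by (simp add: f_def)
  qed
  define q where "q = inv f"
  have qp: "q permutes {0..<3}" unfolding q_def using permutes_inv[OF fp] .
  have q3: "q r < 3" if "r < 3" for r using perm3_lt[OF qp that] .
  have col0: "R (3*b + q r) 0 = r" if "r < 3" for r
  proof -
    have "f (q r) = r" unfolding q_def using permutes_inverses(1)[OF fp] .
    then show ?thesis using q3[OF that] by (simp add: f_def)
  qed
  have qinj: "q r \<noteq> q r'" if "r \<noteq> r'" for r r' using permutes_inj[OF qp] that by (auto dest: injD)
  let ?L = "\<lambda>r p. R (3*b + q r) p"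
  have lt: "?L r p < 3" if "r < 3" "p < 3" for r p using LatB_lt[OF L q3[OF that(1)] that(2)] .
  have rd: "?L r p \<noteq> ?L r p'" if "r < 3" "p < 3" "p' < 3" "p \<noteq> p'" for r p p'
    using LatB_row[OF L q3[OF that(1)] that(2,3,4)] .
  have cd: "?L r p \<noteq> ?L r' p" if "r < 3" "r' < 3" "p < 3" "r \<noteq> r'" for r r' p
    using LatB_col[OF L q3[OF that(1)] q3[OF that(2)] that(3) qinj[OF that(4)]] .
  have lts: "?L 0 1 < 3" "?L 1 1 < 3" "?L 2 1 < 3" "?L 0 2 < 3" "?L 1 2 < 3" "?L 2 2 < 3" by (simp_all add: lt)
  have c0s: "?L 0 0 = 0" "?L 1 0 = 1" "?L 2 0 = 2" using col0[of 0] col0[of 1] col0[of 2] by simp_all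
  have rds: "?L 0 1 \<noteq> 0" "?L 0 2 \<noteq> 0" "?L 0 1 \<noteq> ?L 0 2"
     "?L 1 1 \<noteq> 1" "?L 1 2 \<noteq> 1" "?L 1 1 \<noteq> ?L 1 2"
     "?L 2 1 \<noteq> 2" "?L 2 2 \<noteq> 2" "?L 2 1 \<noteq> ?L 2 2"
    using rd[of 0 1 0] rd[of 0 2 0] rd[of 0 1 2] rd[of 1 1 0] rd[of 1 2 0] rd[of 1 1 2]
      rd[of 2 1 0] rd[of 2 2 0] rd[of 2 1 2] c0s by simp_all
  have cds: "?L 0 1 \<noteq> ?L 1 1" "?L 1 1 \<noteq> ?L 2 1" "?L 0 1 \<noteq> ?L 2 1"
    "?L 0 2 \<noteq> ?L 1 2" "?L 1 2 \<noteq> ?L 2 2" "?L 0 2 \<noteq> ?L 2 2"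
    using cd[of 0 1 1] cd[of 1 2 1] cd[of 0 2 1] cd[of 0 1 2] cd[of 1 2 2] cd[of 0 2 2] by simp_all
  have "(?L 0 1 = 1 \<and> ?L 1 1 = 2 \<and> ?L 2 1 = 0 \<and> ?L 0 2 = 2 \<and> ?L 1 2 = 0 \<and> ?L 2 2 = 1) \<or>
        (?L 0 1 = 2 \<and> ?L 1 1 = 0 \<and> ?L 2 1 = 1 \<and> ?L 0 2 = 1 \<and> ?L 1 2 = 2 \<and> ?L 2 2 = 0)"
    by (rule lat3[OF lts rds cds])
  then show ?thesis
  proof
    assume h: "?L 0 1 = 1 \<and> ?L 1 1 = 2 \<and> ?L 2 1 = 0 \<and> ?L 0 2 = 2 \<and> ?L 1 2 = 0 \<and> ?L 2 2 = 1"
    have "\<forall>r<3. \<forall>p<3. ?L r p = (r + 1*p) mod 3" using h c0s by (simp add: all3)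
    then show ?thesis using qp by blast
  next
    assume h: "?L 0 1 = 2 \<and> ?L 1 1 = 0 \<and> ?L 2 1 = 1 \<and> ?L 0 2 = 1 \<and> ?L 1 2 = 2 \<and> ?L 2 2 = 0"
    have "\<forall>r<3. \<forall>p<3. ?L r p = (r + 2*p) mod 3" using h c0s by (simp add: all3)
    then show ?thesis using qp by blast
  qed
qed

definition N :: "(nat \<Rightarrow> nat) \<Rightarrow> nat \<Rightarrow> nat \<Rightarrow> nat" where
  "N s i p = (i mod 3 + s (i div 3) * p) mod 3"
definition N' :: "(nat \<Rightarrow> nat) \<Rightarrow> nat \<Rightarrow> nat \<Rightarrow> nat" where
  "N' t b j = N t j b"
definition vec :: "nat \<Rightarrow> nat \<Rightarrow> nat \<Rightarrow> nat \<Rightarrow> nat" where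
  "vec a b c = (\<lambda>i. if i = 0 then a else if i = 1 then b else c)"

lemma i9_cases: "(i::nat) < 9 \<Longrightarrow> (i div 3 = 0 \<and> i = i mod 3) \<or> (i div 3 = 1 \<and> i = 3 + i mod 3) \<or> (i div 3 = 2 \<and> i = 6 + i mod 3)"
proof -
  assume "i < 9"
  then have d: "i div 3 < 3" by simp
  have e: "i div 3 * 3 + i mod 3 = i" by (rule div_mult_mod_eq)
  consider "i div 3 = 0" | "i div 3 = 1" | "i div 3 = 2" using less3_cases[OF d] by auto
  then show ?thesis
  proof cases
    case 1 then show ?thesis using e by linarith
  next
    case 2 then show ?thesis using e by linarith
  next
    case 3 then show ?thesis using e by linarith
  qed
qed

lemma lemmaB: assumes "LatR R"
  shows "\<exists>s. (\<forall>x<3. s x = 1 \<or> s x = 2) \<and> Ob R C = Ob (N s) C"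
proof -
  obtain q0 s0 where h0: "q0 permutes {0..<3}" "s0 = 1 \<or> s0 = 2" "\<forall>r<3. \<forall>p<3. R (3*0 + q0 r) p = (r + s0*p) mod 3"
    using band_norm assms unfolding LatR_def by (metis zero_less_numeral)
  obtain q1 s1 where h1: "q1 permutes {0..<3}" "s1 = 1 \<or> s1 = 2" "\<forall>r<3. \<forall>p<3. R (3*1 + q1 r) p = (r + s1*p) mod 3"
    using band_norm assms unfolding LatR_def by (metis one_less_numeral_iff semiring_norm(77))
  obtain q2 s2 where h2: "q2 permutes {0..<3}" "s2 = 1 \<or> s2 = 2" "\<forall>r<3. \<forall>p<3. R (3*2 + q2 r) p = (r + s2*p) mod 3"
    using band_norm assms unfolding LatR_def by (metis less_numeral_extra(4) numeral_less_iff semiring_norm(78) semiring_norm(79) numeral_2_eq_2 numeral_3_eq_3 lessI)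
  have "Ob R C = Ob (rowp 0 q0 R) C" by (rule Ob_row[OF _ h0(1)]) simp
  also have "\<dots> = Ob (rowp 1 q1 (rowp 0 q0 R)) C" by (rule Ob_row[OF _ h1(1)]) simp
  also have "\<dots> = Ob (rowp 2 q2 (rowp 1 q1 (rowp 0 q0 R))) C" by (rule Ob_row[OF _ h2(1)]) simp
  also have "\<dots> = Ob (N (vec s0 s1 s2)) C"
  proof (rule Ob_cong)
    fix i p :: nat assume i: "i < 9" and p: "p < 3"
    have m: "i mod 3 < 3" by simp
    have a0: "q0 (i mod 3) < 3" "q1 (i mod 3) < 3" "q2 (i mod 3) < 3"
      using perm3_lt[OF h0(1) m] perm3_lt[OF h1(1) m] perm3_lt[OF h2(1) m] by auto
    show "rowp 2 q2 (rowp 1 q1 (rowp 0 q0 R)) i p = N (vec s0 s1 s2) i p"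
      using i9_cases[OF i] h0(3) h1(3) h2(3) a0 p m
      by (auto simp: rowp_def N_def vec_def dm3)
  qed simp
  finally show ?thesis using h0(2) h1(2) h2(2) by (intro exI[of _ "vec s0 s1 s2"]) (auto simp: vec_def all3)
qed

lemma lemmaC: assumes "LatC C"
  shows "\<exists>t. (\<forall>x<3. t x = 1 \<or> t x = 2) \<and> Ob R C = Ob R (N' t)"
proof -
  have L: "LatR (\<lambda>i p. C p i)" using assms by (simp add: LatC_def)
  obtain t where t: "\<forall>x<3. t x = 1 \<or> t x = 2" "Ob (\<lambda>i p. C p i) (\<lambda>b j. R j b) = Ob (N t) (\<lambda>b j. R j b)"
    using lemmaB[OF L] by blast
  have "Ob R C = Ob (\<lambda>i p. C p i) (\<lambda>b j. R j b)" by (rule Ob_trans)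
  also have "\<dots> = Ob (N t) (\<lambda>b j. R j b)" by (rule t(2))
  also have "\<dots> = Ob R (N' t)"
  proof -
    have "(\<lambda>b j. N t j b) = N' t" by (simp add: fun_eq_iff N'_def)
    then show ?thesis by (subst Ob_trans) simp
  qed
  finally show ?thesis using t(1) by blast
qed

lemma Ob_T: "Ob (N s) (N' t) = Ob (N t) (N' s)"
proof -
  have "(\<lambda>b j. N s j b) = N' s" by (simp add: fun_eq_iff N'_def)
  moreover have "(\<lambda>i p. N' t p i) = N t" by (simp add: fun_eq_iff N'_def)
  ultimately show ?thesis by (subst Ob_trans) simp
qed

definition sw12 :: "nat \<Rightarrow> nat" where "sw12 x = (if x = 1 then 2 else if x = 2 then 1 else x)"
definition sw01 :: "nat \<Rightarrow> nat" where "sw01 x = (if x = 0 then 1 else if x = 1 then 0 else x)"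
definition shf :: "nat \<Rightarrow> nat \<Rightarrow> nat" where "shf u = (\<lambda>c. if c < 3 then (c + 2 * u) mod 3 else c)"

lemma sw12_perm: "sw12 permutes {0..<3}"
proof (rule perm3I)
  show "sw12 x < 3" if "x < 3" for x using less3_cases[OF that] by (auto simp: sw12_def)
  show "x = y" if "x < 3" "y < 3" "sw12 x = sw12 y" for x y
    using less3_cases[OF that(1)] less3_cases[OF that(2)] that(3) apply (elim disjE) by (simp_all add: sw12_def)
  show "sw12 x = x" if "3 \<le> x" for x using that by (simp add: sw12_def)
qed
lemma sw01_perm: "sw01 permutes {0..<3}"
proof (rule perm3I)
  show "sw01 x < 3" if "x < 3" for x using less3_cases[OF that] by (auto simp: sw01_def)
  show "x = y" if "x < 3" "y < 3" "sw01 x = sw01 y" for x y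
    using less3_cases[OF that(1)] less3_cases[OF that(2)] that(3) apply (elim disjE) by (simp_all add: sw01_def)
  show "sw01 x = x" if "3 \<le> x" for x using that by (simp add: sw01_def)
qed
lemma shf_perm: "u = 1 \<or> u = 2 \<Longrightarrow> shf u permutes {0..<3}"
proof (rule perm3I)
  assume u: "u = 1 \<or> u = 2"
  show "shf u x < 3" if "x < 3" for x using that by (simp add: shf_def)
  show "x = y" if "x < 3" "y < 3" "shf u x = shf u y" for x y
    using that u less3_cases[OF that(1)] less3_cases[OF that(2)] apply (simp add: shf_def)
    apply (elim disjE) by simp_all
  show "shf u x = x" if "3 \<le> x" for x using that by (simp add: shf_def)
qed

lemma d3s: "r < 3 \<Longrightarrow> (3 + r) div 3 = (1::nat)" "r < 3 \<Longrightarrow> (6 + r) div 3 = (2::nat)"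
  "r < 3 \<Longrightarrow> (3 + r) mod 3 = (r::nat)" "r < 3 \<Longrightarrow> (6 + r) mod 3 = (r::nat)"
  using dm3[of r 1] dm3[of r 2] by simp_all

lemma keyA: "b < 3 \<Longrightarrow> u = 1 \<or> u = 2 \<Longrightarrow> x < 3 \<Longrightarrow> (x + u * sw12 b) mod 3 = (x + (3 - u) * b) mod (3::nat)"
  apply (drule less3_cases)+ apply (elim disjE) by (simp_all add: sw12_def)

lemma keyD: "b < 3 \<Longrightarrow> u = 1 \<or> u = 2 \<Longrightarrow> x < 3 \<Longrightarrow> ((x + 2 * u) mod 3 + u * sw01 b) mod 3 = (x + (3 - u) * b) mod (3::nat)"
  apply (drule less3_cases)+ apply (elim disjE) by (simp_all add: sw01_def)

lemma opA:
  assumes "\<forall>x<3. s x = 1 \<or> s x = 2" "\<forall>x<3. t x = 1 \<or> t x = 2"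
    "\<forall>x<3. s' x = s (sw12 x)" "\<forall>x<3. t' x = 3 - t x"
  shows "Ob (N s) (N' t) = Ob (N s') (N' t')"
proof -
  have "Ob (N s) (N' t) = Ob (\<lambda>i p. N s (3 * sw12 (i div 3) + i mod 3) p) (\<lambda>b j. N' t (sw12 b) j)"
    by (rule Ob_band[OF sw12_perm])
  also have "\<dots> = Ob (N s') (N' t')"
  proof (rule Ob_cong)
    fix i p :: nat assume i: "i < 9" and p: "p < 3"
    have "i div 3 < 3" "i mod 3 < 3" using i by auto
    then show "N s (3 * sw12 (i div 3) + i mod 3) p = N s' i p"
      using assms(3) by (simp add: N_def dm3)
  next
    fix b j :: nat assume b: "b < 3" and j: "j < 9"
    have jj: "j div 3 < 3" "j mod 3 < 3" using j by auto
    show "N' t (sw12 b) j = N' t' b j"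
      using keyA[OF b _ jj(2), of "t (j div 3)"] assms(2,4) jj(1) by (simp add: N'_def N_def)
  qed
  finally show ?thesis .
qed

lemma colp3: fixes \<rho> :: "nat \<Rightarrow> nat \<Rightarrow> nat" assumes "\<And>k. k < 3 \<Longrightarrow> \<rho> k permutes {0..<3}"
  shows "Ob R C = Ob R (colp 2 (\<rho> 2) (colp 1 (\<rho> 1) (colp 0 (\<rho> 0) C)))"
proof -
  have p: "\<rho> 0 permutes {0..<3}" "\<rho> 1 permutes {0..<3}" "\<rho> 2 permutes {0..<3}" using assms by simp_all
  have "Ob R C = Ob R (colp 0 (\<rho> 0) C)" by (rule Ob_col[OF _ p(1)]) simp
  also have "\<dots> = Ob R (colp 1 (\<rho> 1) (colp 0 (\<rho> 0) C))" by (rule Ob_col[OF _ p(2)]) simp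
  also have "\<dots> = Ob R (colp 2 (\<rho> 2) (colp 1 (\<rho> 1) (colp 0 (\<rho> 0) C)))" by (rule Ob_col[OF _ p(3)]) simp
  finally show ?thesis .
qed

lemma colp3_val: fixes \<rho> :: "nat \<Rightarrow> nat \<Rightarrow> nat" assumes "\<And>k m. k < 3 \<Longrightarrow> m < 3 \<Longrightarrow> \<rho> k m < 3" "j < 9"
  shows "colp 2 (\<rho> 2) (colp 1 (\<rho> 1) (colp 0 (\<rho> 0) C)) b j = C b (3 * (j div 3) + \<rho> (j div 3) (j mod 3))"
proof -
  have m: "j mod 3 < 3" by simp
  have r: "\<rho> 0 (j mod 3) < 3" "\<rho> 1 (j mod 3) < 3" "\<rho> 2 (j mod 3) < 3" using assms(1)[OF _ m] by auto
  show ?thesis using i9_cases[OF assms(2)] r by (auto simp: colp_def d3s)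
qed

lemma opD:
  assumes "\<forall>x<3. s x = 1 \<or> s x = 2" "\<forall>x<3. t x = 1 \<or> t x = 2"
    "\<forall>x<3. s' x = s (sw01 x)" "\<forall>x<3. t' x = 3 - t x"
  shows "Ob (N s) (N' t) = Ob (N s') (N' t')"
proof -
  define \<rho> where "\<rho> = (\<lambda>k. shf (t k))"
  have rp: "\<rho> k permutes {0..<3}" if "k < 3" for k unfolding \<rho>_def using shf_perm assms(2) that by blast
  have r3: "\<rho> k m < 3" if "k < 3" "m < 3" for k m using perm3_lt[OF rp[OF that(1)] that(2)] .
  have "Ob (N s) (N' t) = Ob (\<lambda>i p. N s (3 * sw01 (i div 3) + i mod 3) p) (\<lambda>b j. N' t (sw01 b) j)"
    by (rule Ob_band[OF sw01_perm])
  also have "\<dots> = Ob (\<lambda>i p. N s (3 * sw01 (i div 3) + i mod 3) p)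
     (colp 2 (\<rho> 2) (colp 1 (\<rho> 1) (colp 0 (\<rho> 0) (\<lambda>b j. N' t (sw01 b) j))))"
    by (rule colp3[OF rp])
  also have "\<dots> = Ob (N s') (N' t')"
  proof (rule Ob_cong)
    fix i p :: nat assume i: "i < 9" and p: "p < 3"
    have "i div 3 < 3" "i mod 3 < 3" using i by auto
    then show "N s (3 * sw01 (i div 3) + i mod 3) p = N s' i p"
      using assms(3) by (simp add: N_def dm3)
  next
    fix b j :: nat assume b: "b < 3" and j: "j < 9"
    have jj: "j div 3 < 3" "j mod 3 < 3" using j by auto
    have rr: "\<rho> (j div 3) (j mod 3) < 3" using r3[OF jj] .
    have e: "\<rho> (j div 3) (j mod 3) = (j mod 3 + 2 * t (j div 3)) mod 3" using jj by (simp add: \<rho>_def shf_def)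
    have cv: "colp 2 (\<rho> 2) (colp 1 (\<rho> 1) (colp 0 (\<rho> 0) (\<lambda>b j. N' t (sw01 b) j))) b j
       = N' t (sw01 b) (3 * (j div 3) + \<rho> (j div 3) (j mod 3))"
      using colp3_val[OF r3 j, where C = "\<lambda>b j. N' t (sw01 b) j" and b = b] by simp
    show "colp 2 (\<rho> 2) (colp 1 (\<rho> 1) (colp 0 (\<rho> 0) (\<lambda>b j. N' t (sw01 b) j))) b j = N' t' b j"
      unfolding cv
      using keyD[OF b _ jj(2), of "t (j div 3)"] assms(2,4) jj(1) rr e by (simp add: N'_def N_def dm3)
  qed
  finally show ?thesis .
qed

lemma opB:
  assumes "\<forall>x<3. s x = 1 \<or> s x = 2" "\<forall>x<3. t x = 1 \<or> t x = 2"
    "\<forall>x<3. s' x = 3 - s x" "\<forall>x<3. t' x = t (sw12 x)"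
  shows "Ob (N s) (N' t) = Ob (N s') (N' t')"
  using Ob_T[of s t] opA[OF assms(2,1,4,3)] Ob_T[of t' s'] by simp

lemma opE:
  assumes "\<forall>x<3. s x = 1 \<or> s x = 2" "\<forall>x<3. t x = 1 \<or> t x = 2"
    "\<forall>x<3. s' x = 3 - s x" "\<forall>x<3. t' x = t (sw01 x)"
  shows "Ob (N s) (N' t) = Ob (N s') (N' t')"
  using Ob_T[of s t] opD[OF assms(2,1,4,3)] Ob_T[of t' s'] by simp

definition O1 where "O1 = Ob (N (vec 1 1 1)) (N' (vec 1 1 1))"
definition O2 where "O2 = Ob (N (vec 1 1 1)) (N' (vec 1 1 2))"
definition O3 where "O3 = Ob (N (vec 1 1 2)) (N' (vec 1 1 2))"

lemma c_111_111: "Ob (N (vec 1 1 1)) (N' (vec 1 1 1)) = O1" by (simp add: O1_def)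
lemma c_111_112: "Ob (N (vec 1 1 1)) (N' (vec 1 1 2)) = O2" by (simp add: O2_def)
lemma c_112_112: "Ob (N (vec 1 1 2)) (N' (vec 1 1 2)) = O3" by (simp add: O3_def)
lemma c_111_222: "Ob (N (vec 1 1 1)) (N' (vec 2 2 2)) = O1"
  by (rule trans[OF opA c_111_111]) (simp_all add: vec_def all3 sw12_def sw01_def)
lemma c_222_111: "Ob (N (vec 2 2 2)) (N' (vec 1 1 1)) = O1"
  by (rule trans[OF opB c_111_111]) (simp_all add: vec_def all3 sw12_def sw01_def)
lemma c_111_221: "Ob (N (vec 1 1 1)) (N' (vec 2 2 1)) = O2"
  by (rule trans[OF opA c_111_112]) (simp_all add: vec_def all3 sw12_def sw01_def)
lemma c_222_121: "Ob (N (vec 2 2 2)) (N' (vec 1 2 1)) = O2"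
  by (rule trans[OF opB c_111_112]) (simp_all add: vec_def all3 sw12_def sw01_def)
lemma c_222_112: "Ob (N (vec 2 2 2)) (N' (vec 1 1 2)) = O2"
  by (rule trans[OF opE c_111_112]) (simp_all add: vec_def all3 sw12_def sw01_def)
lemma c_112_111: "Ob (N (vec 1 1 2)) (N' (vec 1 1 1)) = O2" using Ob_T[of "vec 1 1 2" "vec 1 1 1"] c_111_112 by simp
lemma c_121_221: "Ob (N (vec 1 2 1)) (N' (vec 2 2 1)) = O3"
  by (rule trans[OF opA c_112_112]) (simp_all add: vec_def all3 sw12_def sw01_def)
lemma c_112_221: "Ob (N (vec 1 1 2)) (N' (vec 2 2 1)) = O3"
  by (rule trans[OF opD c_112_112]) (simp_all add: vec_def all3 sw12_def sw01_def)
lemma c_221_121: "Ob (N (vec 2 2 1)) (N' (vec 1 2 1)) = O3"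
  by (rule trans[OF opB c_112_112]) (simp_all add: vec_def all3 sw12_def sw01_def)
lemma c_221_112: "Ob (N (vec 2 2 1)) (N' (vec 1 1 2)) = O3"
  by (rule trans[OF opE c_112_112]) (simp_all add: vec_def all3 sw12_def sw01_def)
lemma c_222_222: "Ob (N (vec 2 2 2)) (N' (vec 2 2 2)) = O1"
  by (rule trans[OF opB c_111_222]) (simp_all add: vec_def all3 sw12_def sw01_def)
lemma c_222_212: "Ob (N (vec 2 2 2)) (N' (vec 2 1 2)) = O2"
  by (rule trans[OF opB c_111_221]) (simp_all add: vec_def all3 sw12_def sw01_def)
lemma c_222_221: "Ob (N (vec 2 2 2)) (N' (vec 2 2 1)) = O2"
  by (rule trans[OF opE c_111_221]) (simp_all add: vec_def all3 sw12_def sw01_def)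
lemma c_221_111: "Ob (N (vec 2 2 1)) (N' (vec 1 1 1)) = O2" using Ob_T[of "vec 2 2 1" "vec 1 1 1"] c_111_221 by simp
lemma c_111_211: "Ob (N (vec 1 1 1)) (N' (vec 2 1 1)) = O2"
  by (rule trans[OF opE c_222_121]) (simp_all add: vec_def all3 sw12_def sw01_def)
lemma c_121_222: "Ob (N (vec 1 2 1)) (N' (vec 2 2 2)) = O2" using Ob_T[of "vec 1 2 1" "vec 2 2 2"] c_222_121 by simp
lemma c_111_121: "Ob (N (vec 1 1 1)) (N' (vec 1 2 1)) = O2"
  by (rule trans[OF opB c_222_112]) (simp_all add: vec_def all3 sw12_def sw01_def)
lemma c_112_222: "Ob (N (vec 1 1 2)) (N' (vec 2 2 2)) = O2" using Ob_T[of "vec 1 1 2" "vec 2 2 2"] c_222_112 by simp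
lemma c_211_112: "Ob (N (vec 2 1 1)) (N' (vec 1 1 2)) = O3"
  by (rule trans[OF opD c_121_221]) (simp_all add: vec_def all3 sw12_def sw01_def)
lemma c_212_212: "Ob (N (vec 2 1 2)) (N' (vec 2 1 2)) = O3"
  by (rule trans[OF opB c_121_221]) (simp_all add: vec_def all3 sw12_def sw01_def)
lemma c_212_221: "Ob (N (vec 2 1 2)) (N' (vec 2 2 1)) = O3"
  by (rule trans[OF opE c_121_221]) (simp_all add: vec_def all3 sw12_def sw01_def)
lemma c_121_112: "Ob (N (vec 1 2 1)) (N' (vec 1 1 2)) = O3"
  by (rule trans[OF opA c_112_221]) (simp_all add: vec_def all3 sw12_def sw01_def)
lemma c_221_212: "Ob (N (vec 2 2 1)) (N' (vec 2 1 2)) = O3"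
  by (rule trans[OF opB c_112_221]) (simp_all add: vec_def all3 sw12_def sw01_def)
lemma c_221_221: "Ob (N (vec 2 2 1)) (N' (vec 2 2 1)) = O3"
  by (rule trans[OF opE c_112_221]) (simp_all add: vec_def all3 sw12_def sw01_def)
lemma c_112_211: "Ob (N (vec 1 1 2)) (N' (vec 2 1 1)) = O3"
  by (rule trans[OF opE c_221_121]) (simp_all add: vec_def all3 sw12_def sw01_def)
lemma c_112_121: "Ob (N (vec 1 1 2)) (N' (vec 1 2 1)) = O3"
  by (rule trans[OF opB c_221_112]) (simp_all add: vec_def all3 sw12_def sw01_def)
lemma c_111_122: "Ob (N (vec 1 1 1)) (N' (vec 1 2 2)) = O2"
  by (rule trans[OF opE c_222_212]) (simp_all add: vec_def all3 sw12_def sw01_def)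
lemma c_212_222: "Ob (N (vec 2 1 2)) (N' (vec 2 2 2)) = O2" using Ob_T[of "vec 2 1 2" "vec 2 2 2"] c_222_212 by simp
lemma c_111_212: "Ob (N (vec 1 1 1)) (N' (vec 2 1 2)) = O2"
  by (rule trans[OF opB c_222_221]) (simp_all add: vec_def all3 sw12_def sw01_def)
lemma c_221_222: "Ob (N (vec 2 2 1)) (N' (vec 2 2 2)) = O2" using Ob_T[of "vec 2 2 1" "vec 2 2 2"] c_222_221 by simp
lemma c_222_211: "Ob (N (vec 2 2 2)) (N' (vec 2 1 1)) = O2"
  by (rule trans[OF opB c_111_211]) (simp_all add: vec_def all3 sw12_def sw01_def)
lemma c_211_111: "Ob (N (vec 2 1 1)) (N' (vec 1 1 1)) = O2" using Ob_T[of "vec 2 1 1" "vec 1 1 1"] c_111_211 by simp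
lemma c_121_111: "Ob (N (vec 1 2 1)) (N' (vec 1 1 1)) = O2" using Ob_T[of "vec 1 2 1" "vec 1 1 1"] c_111_121 by simp
lemma c_211_221: "Ob (N (vec 2 1 1)) (N' (vec 2 2 1)) = O3"
  by (rule trans[OF opA c_211_112]) (simp_all add: vec_def all3 sw12_def sw01_def)
lemma c_122_121: "Ob (N (vec 1 2 2)) (N' (vec 1 2 1)) = O3"
  by (rule trans[OF opB c_211_112]) (simp_all add: vec_def all3 sw12_def sw01_def)
lemma c_122_112: "Ob (N (vec 1 2 2)) (N' (vec 1 1 2)) = O3"
  by (rule trans[OF opE c_211_112]) (simp_all add: vec_def all3 sw12_def sw01_def)
lemma c_121_122: "Ob (N (vec 1 2 1)) (N' (vec 1 2 2)) = O3"
  by (rule trans[OF opE c_212_212]) (simp_all add: vec_def all3 sw12_def sw01_def)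
lemma c_121_212: "Ob (N (vec 1 2 1)) (N' (vec 2 1 2)) = O3"
  by (rule trans[OF opB c_212_221]) (simp_all add: vec_def all3 sw12_def sw01_def)
lemma c_212_121: "Ob (N (vec 2 1 2)) (N' (vec 1 2 1)) = O3"
  by (rule trans[OF opB c_121_112]) (simp_all add: vec_def all3 sw12_def sw01_def)
lemma c_212_112: "Ob (N (vec 2 1 2)) (N' (vec 1 1 2)) = O3"
  by (rule trans[OF opE c_121_112]) (simp_all add: vec_def all3 sw12_def sw01_def)
lemma c_112_122: "Ob (N (vec 1 1 2)) (N' (vec 1 2 2)) = O3"
  by (rule trans[OF opE c_221_212]) (simp_all add: vec_def all3 sw12_def sw01_def)
lemma c_112_212: "Ob (N (vec 1 1 2)) (N' (vec 2 1 2)) = O3"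
  by (rule trans[OF opB c_221_221]) (simp_all add: vec_def all3 sw12_def sw01_def)
lemma c_221_211: "Ob (N (vec 2 2 1)) (N' (vec 2 1 1)) = O3"
  by (rule trans[OF opB c_112_211]) (simp_all add: vec_def all3 sw12_def sw01_def)
lemma c_222_122: "Ob (N (vec 2 2 2)) (N' (vec 1 2 2)) = O2"
  by (rule trans[OF opB c_111_122]) (simp_all add: vec_def all3 sw12_def sw01_def)
lemma c_122_111: "Ob (N (vec 1 2 2)) (N' (vec 1 1 1)) = O2" using Ob_T[of "vec 1 2 2" "vec 1 1 1"] c_111_122 by simp
lemma c_212_111: "Ob (N (vec 2 1 2)) (N' (vec 1 1 1)) = O2" using Ob_T[of "vec 2 1 2" "vec 1 1 1"] c_111_212 by simp
lemma c_211_222: "Ob (N (vec 2 1 1)) (N' (vec 2 2 2)) = O2" using Ob_T[of "vec 2 1 1" "vec 2 2 2"] c_222_211 by simp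
lemma c_122_212: "Ob (N (vec 1 2 2)) (N' (vec 2 1 2)) = O3"
  by (rule trans[OF opB c_211_221]) (simp_all add: vec_def all3 sw12_def sw01_def)
lemma c_122_221: "Ob (N (vec 1 2 2)) (N' (vec 2 2 1)) = O3"
  by (rule trans[OF opE c_211_221]) (simp_all add: vec_def all3 sw12_def sw01_def)
lemma c_211_211: "Ob (N (vec 2 1 1)) (N' (vec 2 1 1)) = O3"
  by (rule trans[OF opE c_122_121]) (simp_all add: vec_def all3 sw12_def sw01_def)
lemma c_211_121: "Ob (N (vec 2 1 1)) (N' (vec 1 2 1)) = O3"
  by (rule trans[OF opB c_122_112]) (simp_all add: vec_def all3 sw12_def sw01_def)
lemma c_212_122: "Ob (N (vec 2 1 2)) (N' (vec 1 2 2)) = O3"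
  by (rule trans[OF opB c_121_122]) (simp_all add: vec_def all3 sw12_def sw01_def)
lemma c_121_211: "Ob (N (vec 1 2 1)) (N' (vec 2 1 1)) = O3"
  by (rule trans[OF opE c_212_121]) (simp_all add: vec_def all3 sw12_def sw01_def)
lemma c_121_121: "Ob (N (vec 1 2 1)) (N' (vec 1 2 1)) = O3"
  by (rule trans[OF opB c_212_112]) (simp_all add: vec_def all3 sw12_def sw01_def)
lemma c_221_122: "Ob (N (vec 2 2 1)) (N' (vec 1 2 2)) = O3"
  by (rule trans[OF opB c_112_122]) (simp_all add: vec_def all3 sw12_def sw01_def)
lemma c_122_222: "Ob (N (vec 1 2 2)) (N' (vec 2 2 2)) = O2" using Ob_T[of "vec 1 2 2" "vec 2 2 2"] c_222_122 by simp
lemma c_211_122: "Ob (N (vec 2 1 1)) (N' (vec 1 2 2)) = O3"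
  by (rule trans[OF opE c_122_212]) (simp_all add: vec_def all3 sw12_def sw01_def)
lemma c_211_212: "Ob (N (vec 2 1 1)) (N' (vec 2 1 2)) = O3"
  by (rule trans[OF opB c_122_221]) (simp_all add: vec_def all3 sw12_def sw01_def)
lemma c_122_211: "Ob (N (vec 1 2 2)) (N' (vec 2 1 1)) = O3"
  by (rule trans[OF opB c_211_211]) (simp_all add: vec_def all3 sw12_def sw01_def)
lemma c_212_211: "Ob (N (vec 2 1 2)) (N' (vec 2 1 1)) = O3"
  by (rule trans[OF opB c_121_211]) (simp_all add: vec_def all3 sw12_def sw01_def)
lemma c_122_122: "Ob (N (vec 1 2 2)) (N' (vec 1 2 2)) = O3"
  by (rule trans[OF opB c_211_122]) (simp_all add: vec_def all3 sw12_def sw01_def)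

lemma tab: "a = 1 \<or> a = 2 \<Longrightarrow> b = 1 \<or> b = 2 \<Longrightarrow> c = 1 \<or> c = 2 \<Longrightarrow> d = 1 \<or> d = 2 \<Longrightarrow> e = 1 \<or> e = 2 \<Longrightarrow> f = 1 \<or> f = 2
  \<Longrightarrow> Ob (N (vec a b c)) (N' (vec d e f)) \<in> {O1, O2, O3}"
  by (elim disjE; hypsubst; simp only: c_111_111 c_111_112 c_112_112 c_111_222 c_222_111 c_111_221 c_222_121 c_222_112 c_112_111 c_121_221 c_112_221 c_221_121 c_221_112 c_222_222 c_222_212 c_222_221 c_221_111 c_111_211 c_121_222 c_111_121 c_112_222 c_211_112 c_212_212 c_212_221 c_121_112 c_221_212 c_221_221 c_112_211 c_112_121 c_111_122 c_212_222 c_111_212 c_221_222 c_222_211 c_211_111 c_121_111 c_211_221 c_122_121 c_122_112 c_121_122 c_121_212 c_212_121 c_212_112 c_112_122 c_112_212 c_221_211 c_222_122 c_122_111 c_212_111 c_211_222 c_122_212 c_122_221 c_211_211 c_211_121 c_212_122 c_121_211 c_121_121 c_221_122 c_122_222 c_211_122 c_211_212 c_122_211 c_212_211 c_122_122 insert_iff simp_thms)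

lemma table: assumes "\<forall>x<3. s x = 1 \<or> s x = 2" "\<forall>x<3. t x = 1 \<or> t x = 2"
  shows "Ob (N s) (N' t) \<in> {O1, O2, O3}"
proof -
  have "Ob (N s) (N' t) = Ob (N (vec (s 0) (s 1) (s 2))) (N' (vec (t 0) (t 1) (t 2)))"
  proof (rule Ob_cong)
    fix i p :: nat assume "i < 9" "p < 3"
    then show "N s i p = N (vec (s 0) (s 1) (s 2)) i p" using i9_cases[of i] by (auto simp: N_def vec_def)
  next
    fix b j :: nat assume "b < 3" "j < 9"
    then show "N' t b j = N' (vec (t 0) (t 1) (t 2)) b j" using i9_cases[of j] by (auto simp: N'_def N_def vec_def)
  qed
  moreover have "Ob (N (vec (s 0) (s 1) (s 2))) (N' (vec (t 0) (t 1) (t 2))) \<in> {O1, O2, O3}"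
    by (rule tab) (use assms in auto)
  ultimately show ?thesis by simp
qed

lemma fib1: "v < 9 \<Longrightarrow> (d1 v = 0 \<and> (v = 0 \<or> v = 4 \<or> v = 8)) \<or> (d1 v = 1 \<and> (v = 1 \<or> v = 5 \<or> v = 6)) \<or> (d1 v = 2 \<and> (v = 2 \<or> v = 3 \<or> v = 7))"
  apply (drule less9_cases) apply (elim disjE) by (simp_all add: d1_def)
lemma fib2: "v < 9 \<Longrightarrow> (d2 v = 0 \<and> (v = 0 \<or> v = 5 \<or> v = 7)) \<or> (d2 v = 1 \<and> (v = 1 \<or> v = 3 \<or> v = 8)) \<or> (d2 v = 2 \<and> (v = 2 \<or> v = 4 \<or> v = 6))"
  apply (drule less9_cases) apply (elim disjE) by (simp_all add: d2_def)

lemma fibs1: "v < 9 \<Longrightarrow> d1 v = 0 \<Longrightarrow> v = 0 \<or> v = 4 \<or> v = 8"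
  "v < 9 \<Longrightarrow> d1 v = 1 \<Longrightarrow> v = 1 \<or> v = 5 \<or> v = 6"
  "v < 9 \<Longrightarrow> d1 v = 2 \<Longrightarrow> v = 2 \<or> v = 3 \<or> v = 7"
  using fib1[of v] by auto
lemma fibs2: "v < 9 \<Longrightarrow> d2 v = 0 \<Longrightarrow> v = 0 \<or> v = 5 \<or> v = 7"
  "v < 9 \<Longrightarrow> d2 v = 1 \<Longrightarrow> v = 1 \<or> v = 3 \<or> v = 8"
  "v < 9 \<Longrightarrow> d2 v = 2 \<Longrightarrow> v = 2 \<or> v = 4 \<or> v = 6"
  using fib2[of v] by auto

lemma four_aux: "(x = a \<or> x = b \<or> x = c) \<Longrightarrow> (y = a \<or> y = b \<or> y = c) \<Longrightarrow> (z = a \<or> z = b \<or> z = c) \<Longrightarrow> (w = a \<or> w = b \<or> w = c)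
  \<Longrightarrow> x \<noteq> y \<Longrightarrow> x \<noteq> z \<Longrightarrow> x \<noteq> w \<Longrightarrow> y \<noteq> z \<Longrightarrow> y \<noteq> w \<Longrightarrow> z \<noteq> w \<Longrightarrow> False"
  by blast

lemma four1: "x < 9 \<Longrightarrow> y < 9 \<Longrightarrow> z < 9 \<Longrightarrow> w < 9 \<Longrightarrow> x \<noteq> y \<Longrightarrow> x \<noteq> z \<Longrightarrow> x \<noteq> w \<Longrightarrow> y \<noteq> z \<Longrightarrow> y \<noteq> w \<Longrightarrow> z \<noteq> w
  \<Longrightarrow> d1 y = d1 x \<Longrightarrow> d1 z = d1 x \<Longrightarrow> d1 w = d1 x \<Longrightarrow> False"
proof -
  assume h: "x < 9" "y < 9" "z < 9" "w < 9" "x \<noteq> y" "x \<noteq> z" "x \<noteq> w" "y \<noteq> z" "y \<noteq> w" "z \<noteq> w"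
    "d1 y = d1 x" "d1 z = d1 x" "d1 w = d1 x"
  consider "d1 x = 0" | "d1 x = 1" | "d1 x = 2" using less3_cases[OF d_lt(1)[of x]] by auto
  then show False
  proof cases
    case 1 show False by (rule four_aux[OF fibs1(1)[OF h(1)] fibs1(1)[OF h(2)] fibs1(1)[OF h(3)] fibs1(1)[OF h(4)] h(5-10)]) (use 1 h in auto)
  next
    case 2 show False by (rule four_aux[OF fibs1(2)[OF h(1)] fibs1(2)[OF h(2)] fibs1(2)[OF h(3)] fibs1(2)[OF h(4)] h(5-10)]) (use 2 h in auto)
  next
    case 3 show False by (rule four_aux[OF fibs1(3)[OF h(1)] fibs1(3)[OF h(2)] fibs1(3)[OF h(3)] fibs1(3)[OF h(4)] h(5-10)]) (use 3 h in auto)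
  qed
qed

lemma four2: "x < 9 \<Longrightarrow> y < 9 \<Longrightarrow> z < 9 \<Longrightarrow> w < 9 \<Longrightarrow> x \<noteq> y \<Longrightarrow> x \<noteq> z \<Longrightarrow> x \<noteq> w \<Longrightarrow> y \<noteq> z \<Longrightarrow> y \<noteq> w \<Longrightarrow> z \<noteq> w
  \<Longrightarrow> d2 y = d2 x \<Longrightarrow> d2 z = d2 x \<Longrightarrow> d2 w = d2 x \<Longrightarrow> False"
proof -
  assume h: "x < 9" "y < 9" "z < 9" "w < 9" "x \<noteq> y" "x \<noteq> z" "x \<noteq> w" "y \<noteq> z" "y \<noteq> w" "z \<noteq> w"
    "d2 y = d2 x" "d2 z = d2 x" "d2 w = d2 x"
  consider "d2 x = 0" | "d2 x = 1" | "d2 x = 2" using less3_cases[OF d_lt(2)[of x]] by auto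
  then show False
  proof cases
    case 1 show False by (rule four_aux[OF fibs2(1)[OF h(1)] fibs2(1)[OF h(2)] fibs2(1)[OF h(3)] fibs2(1)[OF h(4)] h(5-10)]) (use 1 h in auto)
  next
    case 2 show False by (rule four_aux[OF fibs2(2)[OF h(1)] fibs2(2)[OF h(2)] fibs2(2)[OF h(3)] fibs2(2)[OF h(4)] h(5-10)]) (use 2 h in auto)
  next
    case 3 show False by (rule four_aux[OF fibs2(3)[OF h(1)] fibs2(3)[OF h(2)] fibs2(3)[OF h(3)] fibs2(3)[OF h(4)] h(5-10)]) (use 3 h in auto)
  qed
qed

lemma d_eq: "x < 9 \<Longrightarrow> y < 9 \<Longrightarrow> d1 x = d1 y \<Longrightarrow> d2 x = d2 y \<Longrightarrow> x = y"
  using d_sym by metis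

lemma meet:
  assumes "x < 9" "y < 9" "z < 9" "x \<noteq> y" "x \<noteq> z" "y \<noteq> z" "d1 y = d1 x" "d1 z = d1 x"
    "u < 9" "v < 9" "w < 9" "u \<noteq> v" "u \<noteq> w" "v \<noteq> w" "d2 v = d2 u" "d2 w = d2 u"
  shows "\<exists>m. (m = x \<or> m = y \<or> m = z) \<and> (m = u \<or> m = v \<or> m = w)"
proof -
  define m where "m = symb (d1 x) (d2 u)"
  have m: "m < 9" "d1 m = d1 x" "d2 m = d2 u" using sym_lt sym_d[OF d_lt(1) d_lt(2)] by (auto simp: m_def)
  have "m = x \<or> m = y \<or> m = z"
  proof (rule ccontr)
    assume "\<not> ?thesis"
    then show False using four1[OF assms(1,2,3) m(1) assms(4,5) _ assms(6) _ _ assms(7,8) m(2)] by auto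
  qed
  moreover have "m = u \<or> m = v \<or> m = w"
  proof (rule ccontr)
    assume "\<not> ?thesis"
    then show False using four2[OF assms(9,10,11) m(1) assms(12,13) _ assms(14) _ _ assms(15,16) m(3)] by auto
  qed
  ultimately show ?thesis by blast
qed

lemma col_eq: "3*p + c = 3*p' + c' \<Longrightarrow> c < 3 \<Longrightarrow> c' < 3 \<Longrightarrow> p = (p'::nat)"
  by (metis dm3(1))

definition RD1 where "RD1 B b p r \<longleftrightarrow> (\<forall>c<3. \<forall>c'<3. d1 (B (3*b+r, 3*p+c)) = d1 (B (3*b+r, 3*p+c')))"
definition RD2 where "RD2 B b p r \<longleftrightarrow> (\<forall>c<3. \<forall>c'<3. d2 (B (3*b+r, 3*p+c)) = d2 (B (3*b+r, 3*p+c')))"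
definition CD1 where "CD1 B b p c \<longleftrightarrow> (\<forall>r<3. \<forall>r'<3. d1 (B (3*b+r, 3*p+c)) = d1 (B (3*b+r', 3*p+c)))"
definition CD2 where "CD2 B b p c \<longleftrightarrow> (\<forall>r<3. \<forall>r'<3. d2 (B (3*b+r, 3*p+c)) = d2 (B (3*b+r', 3*p+c)))"

lemma RD1D: "RD1 B b p r \<Longrightarrow> c < 3 \<Longrightarrow> c' < 3 \<Longrightarrow> d1 (B (3*b+r, 3*p+c)) = d1 (B (3*b+r, 3*p+c'))"
  unfolding RD1_def by blast
lemma RD2D: "RD2 B b p r \<Longrightarrow> c < 3 \<Longrightarrow> c' < 3 \<Longrightarrow> d2 (B (3*b+r, 3*p+c)) = d2 (B (3*b+r, 3*p+c'))"
  unfolding RD2_def by blast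
lemma CD1D: "CD1 B b p c \<Longrightarrow> r < 3 \<Longrightarrow> r' < 3 \<Longrightarrow> d1 (B (3*b+r, 3*p+c)) = d1 (B (3*b+r', 3*p+c))"
  unfolding CD1_def by blast
lemma CD2D: "CD2 B b p c \<Longrightarrow> r < 3 \<Longrightarrow> r' < 3 \<Longrightarrow> d2 (B (3*b+r, 3*p+c)) = d2 (B (3*b+r', 3*p+c))"
  unfolding CD2_def by blast

lemma S1r: "semimagic B \<Longrightarrow> b < 3 \<Longrightarrow> p < 3 \<Longrightarrow> r < 3 \<Longrightarrow> RD1 B b p r \<or> RD2 B b p r"
  using blk_row_line[of B b p r] unfolding RD1_def RD2_def isline_def all3 by auto

lemma S1c: "semimagic B \<Longrightarrow> b < 3 \<Longrightarrow> p < 3 \<Longrightarrow> c < 3 \<Longrightarrow> CD1 B b p c \<or> CD2 B b p c"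
  using blk_col_line[of B b p c] unfolding CD1_def CD2_def isline_def all3 by auto

lemma sm_sud: "semimagic B \<Longrightarrow> sudoku B" by (simp add: semimagic_def)

lemma S2:
  assumes sm: "semimagic B" and h: "b < 3" "p < 3" "r < 3" "c < 3"
  shows "\<not> (RD1 B b p r \<and> CD1 B b p c)" "\<not> (RD2 B b p r \<and> CD2 B b p c)"
proof -
  have s: "sudoku B" using sm by (simp add: semimagic_def)
  define r' where "r' = (if r = 0 then 1 else (0::nat))"
  have r': "r' < 3" "r' \<noteq> r" by (auto simp: r'_def)
  let ?x = "B (3*b+r, 3*p+0)" and ?y = "B (3*b+r, 3*p+1)" and ?z = "B (3*b+r, 3*p+2)" and ?w = "B (3*b+r', 3*p+c)"
  have n: "B (3*b+k, 3*p+m) \<noteq> B (3*b+k', 3*p+m')" if "k<3" "m<3" "k'<3" "m'<3" "(k,m) \<noteq> (k',m')" for k m k' m'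
    using blk_ne[OF s h(1,2) that] .
  have ne: "?x \<noteq> ?y" "?x \<noteq> ?z" "?x \<noteq> ?w" "?y \<noteq> ?z" "?y \<noteq> ?w" "?z \<noteq> ?w"
    using n[of r 0 r 1] n[of r 0 r 2] n[of r 0 r' c] n[of r 1 r 2] n[of r 1 r' c] n[of r 2 r' c] h r' by auto
  have v: "?x < 9" "?y < 9" "?z < 9" "?w < 9" using sud_vals[OF s] by auto
  show "\<not> (RD1 B b p r \<and> CD1 B b p c)"
  proof
    assume a: "RD1 B b p r \<and> CD1 B b p c"
    have e1: "d1 ?y = d1 ?x" "d1 ?z = d1 ?x" "d1 (B (3*b+r, 3*p+c)) = d1 ?x"
      using RD1D[OF conjunct1[OF a], of 1 0] RD1D[OF conjunct1[OF a], of 2 0] RD1D[OF conjunct1[OF a] h(4), of 0] by simp_all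
    have e2: "d1 ?w = d1 (B (3*b+r, 3*p+c))" using CD1D[OF conjunct2[OF a] r'(1) h(3)] .
    show False using four1[OF v ne e1(1,2)] e1(3) e2 by simp
  qed
  show "\<not> (RD2 B b p r \<and> CD2 B b p c)"
  proof
    assume a: "RD2 B b p r \<and> CD2 B b p c"
    have e1: "d2 ?y = d2 ?x" "d2 ?z = d2 ?x" "d2 (B (3*b+r, 3*p+c)) = d2 ?x"
      using RD2D[OF conjunct1[OF a], of 1 0] RD2D[OF conjunct1[OF a], of 2 0] RD2D[OF conjunct1[OF a] h(4), of 0] by simp_all
    have e2: "d2 ?w = d2 (B (3*b+r, 3*p+c))" using CD2D[OF conjunct2[OF a] r'(1) h(3)] .
    show False using four2[OF v ne e1(1,2)] e1(3) e2 by simp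
  qed
qed

lemma S3:
  assumes sm: "semimagic B" and h: "b < 3" "p < 3" "p' < 3" "r < 3"
  shows "\<not> (RD1 B b p r \<and> RD2 B b p' r)"
proof
  assume a: "RD1 B b p r \<and> RD2 B b p' r"
  have s: "sudoku B" using sm by (simp add: semimagic_def)
  have i: "3*b+r < 9" using h by simp
  have cl: "3*q+c < 9" if "q < 3" "c < 3" for q c :: nat using that by simp
  let ?x = "B (3*b+r, 3*p+0)" and ?y = "B (3*b+r, 3*p+1)" and ?z = "B (3*b+r, 3*p+2)"
  let ?u = "B (3*b+r, 3*p'+0)" and ?v = "B (3*b+r, 3*p'+1)" and ?w = "B (3*b+r, 3*p'+2)"
  have ne: "B (3*b+r, 3*q+c) \<noteq> B (3*b+r, 3*q'+c')" if "q < 3" "q' < 3" "c < 3" "c' < 3" "3*q+c \<noteq> 3*q'+c'" for q q' c c'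
    using sud_row_inj[OF s i cl[OF that(1,3)] cl[OF that(2,4)]] that(5) by blast
  have v: "?x < 9" "?y < 9" "?z < 9" "?u < 9" "?v < 9" "?w < 9" using sud_vals[OF s] by auto
  have e: "d1 ?y = d1 ?x" "d1 ?z = d1 ?x" "d2 ?v = d2 ?u" "d2 ?w = d2 ?u"
    using RD1D[OF conjunct1[OF a], of 1 0] RD1D[OF conjunct1[OF a], of 2 0]
      RD2D[OF conjunct2[OF a], of 1 0] RD2D[OF conjunct2[OF a], of 2 0] by simp_all
  have n1: "?x \<noteq> ?y" "?x \<noteq> ?z" "?y \<noteq> ?z" using ne[OF h(2) h(2), of 0 1] ne[OF h(2) h(2), of 0 2] ne[OF h(2) h(2), of 1 2] by simp_all
  have n2: "?u \<noteq> ?v" "?u \<noteq> ?w" "?v \<noteq> ?w" using ne[OF h(3) h(3), of 0 1] ne[OF h(3) h(3), of 0 2] ne[OF h(3) h(3), of 1 2] by simp_all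
  show False
  proof (cases "p = p'")
    case True
    have "d2 ?y = d2 ?x" using RD2D[OF conjunct2[OF a], of 1 0] True by simp
    then have "?x = ?y" using d_eq[OF v(1,2)] e(1) by simp
    then show False using n1 by simp
  next
    case False
    have "\<exists>m. (m = ?x \<or> m = ?y \<or> m = ?z) \<and> (m = ?u \<or> m = ?v \<or> m = ?w)"
      by (rule meet[OF v(1,2,3) n1(1,2,3) e(1,2) v(4,5,6) n2(1,2,3) e(3,4)])
    moreover have nn: "B (3*b+r, 3*p+c) \<noteq> B (3*b+r, 3*p'+c')" if "c < 3" "c' < 3" for c c'
      using ne[OF h(2) h(3) that] col_eq[of p c p' c'] that False by blast
    have "?x \<noteq> ?u" "?x \<noteq> ?v" "?x \<noteq> ?w" "?y \<noteq> ?u" "?y \<noteq> ?v" "?y \<noteq> ?w" "?z \<noteq> ?u" "?z \<noteq> ?v" "?z \<noteq> ?w"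
      using nn[of 0 0] nn[of 0 1] nn[of 0 2] nn[of 1 0] nn[of 1 1] nn[of 1 2] nn[of 2 0] nn[of 2 1] nn[of 2 2] by simp_all
    ultimately show False by blast
  qed
qed

lemma S4:
  assumes sm: "semimagic B" and h: "b < 3" "b' < 3" "p < 3" "c < 3"
  shows "\<not> (CD1 B b p c \<and> CD2 B b' p c)"
proof
  assume a: "CD1 B b p c \<and> CD2 B b' p c"
  have s: "sudoku B" using sm by (simp add: semimagic_def)
  have j: "3*p+c < 9" using h by simp
  have cl: "3*q+r < 9" if "q < 3" "r < 3" for q r :: nat using that by simp
  let ?x = "B (3*b+0, 3*p+c)" and ?y = "B (3*b+1, 3*p+c)" and ?z = "B (3*b+2, 3*p+c)"
  let ?u = "B (3*b'+0, 3*p+c)" and ?v = "B (3*b'+1, 3*p+c)" and ?w = "B (3*b'+2, 3*p+c)"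
  have ne: "B (3*q+r, 3*p+c) \<noteq> B (3*q'+r', 3*p+c)" if "q < 3" "q' < 3" "r < 3" "r' < 3" "3*q+r \<noteq> 3*q'+r'" for q q' r r'
    using sud_col_inj[OF s j cl[OF that(1,3)] cl[OF that(2,4)]] that(5) by blast
  have v: "?x < 9" "?y < 9" "?z < 9" "?u < 9" "?v < 9" "?w < 9" using sud_vals[OF s] by auto
  have e: "d1 ?y = d1 ?x" "d1 ?z = d1 ?x" "d2 ?v = d2 ?u" "d2 ?w = d2 ?u"
    using CD1D[OF conjunct1[OF a], of 1 0] CD1D[OF conjunct1[OF a], of 2 0]
      CD2D[OF conjunct2[OF a], of 1 0] CD2D[OF conjunct2[OF a], of 2 0] by simp_all
  have n1: "?x \<noteq> ?y" "?x \<noteq> ?z" "?y \<noteq> ?z" using ne[OF h(1) h(1), of 0 1] ne[OF h(1) h(1), of 0 2] ne[OF h(1) h(1), of 1 2] by simp_all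
  have n2: "?u \<noteq> ?v" "?u \<noteq> ?w" "?v \<noteq> ?w" using ne[OF h(2) h(2), of 0 1] ne[OF h(2) h(2), of 0 2] ne[OF h(2) h(2), of 1 2] by simp_all
  show False
  proof (cases "b = b'")
    case True
    have "d2 ?y = d2 ?x" using CD2D[OF conjunct2[OF a], of 1 0] True by simp
    then have "?x = ?y" using d_eq[OF v(1,2)] e(1) by simp
    then show False using n1 by simp
  next
    case False
    have "\<exists>m. (m = ?x \<or> m = ?y \<or> m = ?z) \<and> (m = ?u \<or> m = ?v \<or> m = ?w)"
      by (rule meet[OF v(1,2,3) n1(1,2,3) e(1,2) v(4,5,6) n2(1,2,3) e(3,4)])
    moreover have nn: "B (3*b+r, 3*p+c) \<noteq> B (3*b'+r', 3*p+c)" if "r < 3" "r' < 3" for r r'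
      using ne[OF h(1) h(2) that] col_eq[of b r b' r'] that False by blast
    have "?x \<noteq> ?u" "?x \<noteq> ?v" "?x \<noteq> ?w" "?y \<noteq> ?u" "?y \<noteq> ?v" "?y \<noteq> ?w" "?z \<noteq> ?u" "?z \<noteq> ?v" "?z \<noteq> ?w"
      using nn[of 0 0] nn[of 0 1] nn[of 0 2] nn[of 1 0] nn[of 1 1] nn[of 1 2] nn[of 2 0] nn[of 2 1] nn[of 2 2] by simp_all
    ultimately show False by blast
  qed
qed

lemma blockL: assumes sm: "semimagic B" and h: "b < 3" "p < 3" "r0 < 3" and a: "RD1 B b p r0"
  shows "(\<forall>c<3. CD2 B b p c) \<and> (\<forall>r<3. RD1 B b p r)"
proof -
  have c: "CD2 B b p c" if "c < 3" for c using S1c[OF sm h(1,2) that] S2(1)[OF sm h(1,2,3) that] a by blast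
  have r: "RD1 B b p r" if "r < 3" for r using S1r[OF sm h(1,2) that] S2(2)[OF sm h(1,2) that, of 0] c[of 0] by auto
  show ?thesis using c r by blast
qed

lemma globalL: assumes sm: "semimagic B" and a: "RD1 B 0 0 0" and h: "b < 3" "p < 3"
  shows "(\<forall>r<3. RD1 B b p r) \<and> (\<forall>c<3. CD2 B b p c)"
proof -
  have z: "(0::nat) < 3" by simp
  have r0: "RD1 B 0 p 0" using S1r[OF sm z h(2) z] S3[OF sm z z h(2) z] a by blast
  have c0: "CD2 B 0 p 0" using blockL[OF sm z h(2) z r0] by auto
  have c1: "CD2 B b p 0" using S1c[OF sm h z] S4[OF sm h(1) z h(2) z] c0 by blast
  have r1: "RD1 B b p 0" using S1r[OF sm h z] S2(2)[OF sm h z z] c1 by blast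
  show ?thesis using blockL[OF sm h z r1] by blast
qed

lemma structD1: assumes sm: "semimagic B" and a: "RD1 B 0 0 0"
  shows "B = board (\<lambda>i p. d1 (B (i, 3*p))) (\<lambda>b j. d2 (B (3*b, j))) \<and>
     LatR (\<lambda>i p. d1 (B (i, 3*p))) \<and> LatC (\<lambda>b j. d2 (B (3*b, j)))"
proof (intro conjI)
  have s: "sudoku B" using sm by (simp add: semimagic_def)
  have G: "RD1 B b p r" "CD2 B b p c" if "b < 3" "p < 3" "r < 3" "c < 3" for b p r c
    using globalL[OF sm a that(1,2)] that(3,4) by auto
  show "B = board (\<lambda>i p. d1 (B (i, 3*p))) (\<lambda>b j. d2 (B (3*b, j)))"
  proof (rule ext)
    fix x :: "nat \<times> nat"
    obtain i j where x: "x = (i, j)" by (cases x)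
    show "B x = board (\<lambda>i p. d1 (B (i, 3*p))) (\<lambda>b j. d2 (B (3*b, j))) x"
    proof (cases "i < 9 \<and> j < 9")
      case True
      have hh: "i div 3 < 3" "j div 3 < 3" "i mod 3 < 3" "j mod 3 < 3" using True by auto
      have e1: "d1 (B (i, j)) = d1 (B (i, 3 * (j div 3)))"
        using RD1D[OF G(1)[OF hh(1,2,3) hh(3)] hh(4), of 0] by simp
      have e2: "d2 (B (i, j)) = d2 (B (3 * (i div 3), j))"
        using CD2D[OF G(2)[OF hh(1,2,3,4)] hh(3), of 0] by simp
      have "B (i, j) = symb (d1 (B (i, j))) (d2 (B (i, j)))" using d_sym[OF sud_vals[OF s]] by simp
      then show ?thesis using True e1 e2 d_lt by (simp add: x board_def)
    next
      case False then show ?thesis using sud_out[OF s] by (auto simp: x board_def)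
    qed
  qed
  let ?R = "\<lambda>i p. d1 (B (i, 3*p))"
  let ?C = "\<lambda>b j. d2 (B (3*b, j))"
  have v: "B c < 9" for c using sud_vals[OF s] .
  show "LatR ?R" unfolding LatR_def
  proof (intro allI impI)
    fix b :: nat assume b: "b < 3"
    show "LatB ?R b" unfolding LatB_def
    proof (intro conjI allI impI)
      fix r p :: nat assume "r < 3" "p < 3" then show "?R (3*b+r) p < 3" by (simp add: d_lt)
    next
      fix r p p' :: nat assume h: "r < 3" "p < 3" "p' < 3" "p \<noteq> p'"
      show "?R (3*b+r) p \<noteq> ?R (3*b+r) p'"
      proof
        assume eq: "?R (3*b+r) p = ?R (3*b+r) p'"
        have i: "3*b+r < 9" using b h by simp
        have cl: "3*q+c < 9" if "q < 3" "c < 3" for q c :: nat using that by simp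
        have ne: "B (3*b+r, 3*q+c) \<noteq> B (3*b+r, 3*q'+c')" if "q < 3" "q' < 3" "c < 3" "c' < 3" "3*q+c \<noteq> 3*q'+c'" for q q' c c'
          using sud_row_inj[OF s i cl[OF that(1,3)] cl[OF that(2,4)]] that(5) by blast
        have nn: "3*p+c \<noteq> 3*p'+c'" if "c < 3" "c' < 3" for c c' using col_eq[of p c p' c'] that h(4) by blast
        have d: "d1 (B (3*b+r, 3*p+c)) = d1 (B (3*b+r, 3*p+0))" if "c < 3" for c
          using RD1D[OF G(1)[OF b h(2) h(1) h(1)] that, of 0] by simp
        show False
          apply (rule four1[OF v v v v, of "(3*b+r, 3*p+0)" "(3*b+r, 3*p+1)" "(3*b+r, 3*p+2)" "(3*b+r, 3*p'+0)"])
          using ne[OF h(2) h(2), of 0 1] ne[OF h(2) h(2), of 0 2] ne[OF h(2) h(2), of 1 2]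
            ne[OF h(2) h(3), of 0 0] ne[OF h(2) h(3), of 1 0] ne[OF h(2) h(3), of 2 0]
            nn[of 0 0] nn[of 1 0] nn[of 2 0] d[of 1] d[of 2] eq by simp_all
      qed
    next
      fix r r' p :: nat assume h: "r < 3" "r' < 3" "p < 3" "r \<noteq> r'"
      show "?R (3*b+r) p \<noteq> ?R (3*b+r') p"
      proof
        assume eq: "?R (3*b+r) p = ?R (3*b+r') p"
        have d: "d1 (B (3*b+r, 3*p+c)) = d1 (B (3*b+r, 3*p+0))" if "c < 3" for c
          using RD1D[OF G(1)[OF b h(3) h(1) h(1)] that, of 0] by simp
        have ne: "B (3*b+k, 3*p+c) \<noteq> B (3*b+k', 3*p+c')" if "k<3" "c<3" "k'<3" "c'<3" "(k,c) \<noteq> (k',c')" for k k' c c'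
          using blk_ne[OF s b h(3) that] .
        show False
          apply (rule four1[OF v v v v, of "(3*b+r, 3*p+0)" "(3*b+r, 3*p+1)" "(3*b+r, 3*p+2)" "(3*b+r', 3*p+0)"])
          using ne[of r 0 r 1] ne[of r 0 r 2] ne[of r 1 r 2] ne[of r 0 r' 0] ne[of r 1 r' 0] ne[of r 2 r' 0]
            h d[of 1] d[of 2] eq by simp_all
      qed
    qed
  qed
  show "LatC ?C" unfolding LatC_def LatR_def
  proof (intro allI impI)
    fix b :: nat assume b: "b < 3"
    show "LatB (\<lambda>i p. ?C p i) b" unfolding LatB_def
    proof (intro conjI allI impI)
      fix r p :: nat assume "r < 3" "p < 3" then show "?C p (3*b+r) < 3" by (simp add: d_lt)
    next
      fix r p p' :: nat assume h: "r < 3" "p < 3" "p' < 3" "p \<noteq> p'"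
      show "?C p (3*b+r) \<noteq> ?C p' (3*b+r)"
      proof
        assume eq: "?C p (3*b+r) = ?C p' (3*b+r)"
        have j: "3*b+r < 9" using b h by simp
        have cl: "3*q+c < 9" if "q < 3" "c < 3" for q c :: nat using that by simp
        have ne: "B (3*q+c, 3*b+r) \<noteq> B (3*q'+c', 3*b+r)" if "q < 3" "q' < 3" "c < 3" "c' < 3" "3*q+c \<noteq> 3*q'+c'" for q q' c c'
          using sud_col_inj[OF s j cl[OF that(1,3)] cl[OF that(2,4)]] that(5) by blast
        have nn: "3*p+c \<noteq> 3*p'+c'" if "c < 3" "c' < 3" for c c' using col_eq[of p c p' c'] that h(4) by blast
        have d: "d2 (B (3*p+c, 3*b+r)) = d2 (B (3*p+0, 3*b+r))" if "c < 3" for c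
          using CD2D[OF G(2)[OF h(2) b h(1) h(1)] that, of 0] by simp
        show False
          apply (rule four2[OF v v v v, of "(3*p+0, 3*b+r)" "(3*p+1, 3*b+r)" "(3*p+2, 3*b+r)" "(3*p'+0, 3*b+r)"])
          using ne[OF h(2) h(2), of 0 1] ne[OF h(2) h(2), of 0 2] ne[OF h(2) h(2), of 1 2]
            ne[OF h(2) h(3), of 0 0] ne[OF h(2) h(3), of 1 0] ne[OF h(2) h(3), of 2 0]
            nn[of 0 0] nn[of 1 0] nn[of 2 0] d[of 1] d[of 2] eq by simp_all
      qed
    next
      fix r r' p :: nat assume h: "r < 3" "r' < 3" "p < 3" "r \<noteq> r'"
      show "?C p (3*b+r) \<noteq> ?C p (3*b+r')"
      proof
        assume eq: "?C p (3*b+r) = ?C p (3*b+r')"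
        have d: "d2 (B (3*p+c, 3*b+r)) = d2 (B (3*p+0, 3*b+r))" if "c < 3" for c
          using CD2D[OF G(2)[OF h(3) b h(1) h(1)] that, of 0] by simp
        have ne: "B (3*p+k, 3*b+c) \<noteq> B (3*p+k', 3*b+c')" if "k<3" "c<3" "k'<3" "c'<3" "(k,c) \<noteq> (k',c')" for k k' c c'
          using blk_ne[OF s h(3) b that] .
        show False
          apply (rule four2[OF v v v v, of "(3*p+0, 3*b+r)" "(3*p+1, 3*b+r)" "(3*p+2, 3*b+r)" "(3*p+0, 3*b+r')"])
          using ne[of 0 r 1 r] ne[of 0 r 2 r] ne[of 1 r 2 r] ne[of 0 r 0 r'] ne[of 1 r 0 r'] ne[of 2 r 0 r']
            h d[of 1] d[of 2] eq by simp_all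
      qed
    qed
  qed
qed

lemma d_swp: "v < 9 \<Longrightarrow> d1 (swp v) = d2 v \<and> d2 (swp v) = d1 v"
  using sym_d[OF d_lt(2) d_lt(1), of v v] by (simp add: swp_def)

lemma structureL: assumes sm: "semimagic B"
  shows "\<exists>\<pi> R C. (\<pi> = id \<or> \<pi> = swp) \<and> relabel \<pi> B = board R C \<and> LatR R \<and> LatC C"
proof (cases "RD1 B 0 0 0")
  case True
  have e: "relabel id B = B" using relabel_id[OF sm_sud[OF sm]] .
  let ?R = "\<lambda>i p. d1 (B (i, 3*p))" and ?C = "\<lambda>b j. d2 (B (3*b, j))"
  have h: "B = board ?R ?C" "LatR ?R" "LatC ?C" using structD1[OF sm True] by auto
  have "relabel id B = board ?R ?C" using e h(1) by simp
  then show ?thesis using h(2,3) by blast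
next
  case False
  have z: "(0::nat) < 3" by simp
  have r2: "RD2 B 0 0 0" using S1r[OF sm z z z] False by blast
  have sm': "semimagic (relabel swp B)" using swp_S_sm sm unfolding S_sm_def by blast
  have s: "sudoku B" using sm by (simp add: semimagic_def)
  have "RD1 (relabel swp B) 0 0 0" unfolding RD1_def
  proof (intro allI impI)
    fix c c' :: nat assume c: "c < 3" "c' < 3"
    have "d2 (B (0, c)) = d2 (B (0, c'))" using RD2D[OF r2 c] by simp
    moreover have "d1 (swp (B (0, c))) = d2 (B (0, c))" "d1 (swp (B (0, c'))) = d2 (B (0, c'))"
      using d_swp[OF sud_vals[OF s]] by auto
    ultimately show "d1 (relabel swp B (3 * 0 + 0, 3 * 0 + c)) = d1 (relabel swp B (3 * 0 + 0, 3 * 0 + c'))"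
      using c by (simp add: relabel_def)
  qed
  then show ?thesis using structD1[OF sm'] by blast
qed

lemma sym_inj: "a < 3 \<Longrightarrow> b < 3 \<Longrightarrow> a' < 3 \<Longrightarrow> b' < 3 \<Longrightarrow> symb a b = symb a' b' \<Longrightarrow> a = a' \<and> b = b'"
  using sym_d by metis

lemma perm_sum3: "(x::nat) < 3 \<Longrightarrow> y < 3 \<Longrightarrow> z < 3 \<Longrightarrow> x \<noteq> y \<Longrightarrow> y \<noteq> z \<Longrightarrow> x \<noteq> z
  \<Longrightarrow> f x + f y + f z = f 0 + f 1 + (f 2 :: nat)"
  apply (drule less3_cases)+ apply (elim disjE) by simp_all

lemma sym_row: "a < 3 \<Longrightarrow> symb a 0 + symb a 1 + symb a 2 = 12"
  apply (drule less3_cases) apply (elim disjE) by (simp_all add: symb_def)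
lemma sym_col: "a < 3 \<Longrightarrow> symb 0 a + symb 1 a + symb 2 a = 12"
  apply (drule less3_cases) apply (elim disjE) by (simp_all add: symb_def)

lemma img9: "inj_on f {0..<9} \<Longrightarrow> (\<And>x. x < 9 \<Longrightarrow> f x < (9::nat)) \<Longrightarrow> f ` {0..<9::nat} = {0..<9}"
  by (rule endo_inj_surj) auto

lemma LatR_D: assumes "LatR R"
  shows "i < 9 \<Longrightarrow> p < 3 \<Longrightarrow> R i p < 3"
    and "i < 9 \<Longrightarrow> p < 3 \<Longrightarrow> p' < 3 \<Longrightarrow> R i p = R i p' \<Longrightarrow> p = p'"
    and "b < 3 \<Longrightarrow> r < 3 \<Longrightarrow> r' < 3 \<Longrightarrow> p < 3 \<Longrightarrow> R (3*b+r) p = R (3*b+r') p \<Longrightarrow> r = r'"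
proof -
  show "i < 9 \<Longrightarrow> p < 3 \<Longrightarrow> R i p < 3"
    using assms LatB_lt[of R "i div 3" "i mod 3" p] unfolding LatR_def by simp
  show "i < 9 \<Longrightarrow> p < 3 \<Longrightarrow> p' < 3 \<Longrightarrow> R i p = R i p' \<Longrightarrow> p = p'"
    using assms LatB_row[of R "i div 3" "i mod 3" p p'] unfolding LatR_def by auto
  show "b < 3 \<Longrightarrow> r < 3 \<Longrightarrow> r' < 3 \<Longrightarrow> p < 3 \<Longrightarrow> R (3*b+r) p = R (3*b+r') p \<Longrightarrow> r = r'"
    using assms LatB_col[of R b r r' p] unfolding LatR_def by auto
qed

lemma lat_sm: assumes R: "LatR R" and C: "LatC C"
  shows "semimagic (board R C)"
proof -
  have C': "LatR (\<lambda>i p. C p i)" using C by (simp add: LatC_def)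
  note r1 = LatR_D(1)[OF R] and r2 = LatR_D(2)[OF R] and r3 = LatR_D(3)[OF R]
  note c1 = LatR_D(1)[OF C'] and c2 = LatR_D(2)[OF C'] and c3 = LatR_D(3)[OF C']
  let ?B = "board R C"
  have bv: "?B (i, j) = symb (R i (j div 3)) (C (i div 3) j)" if "i < 9" "j < 9" for i j
    using that r1 c1 by (simp add: board_def)
  have bl: "?B (i, j) < 9" for i j by (simp add: board_def sym_lt)
  have dm: "3 * (j div 3) + j mod 3 = j" for j :: nat by simp
  have sud: "sudoku ?B" unfolding sudoku_def
  proof (intro conjI allI impI)
    fix c :: "nat \<times> nat" assume "c \<notin> cells" then show "?B c = 0" by (cases c) (auto simp: board_def)
  next
    fix i :: nat assume i: "i < 9"
    show "(\<lambda>j. ?B (i, j)) ` {0..<9} = {0..<9}"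
    proof (rule img9)
      show "inj_on (\<lambda>j. ?B (i, j)) {0..<9}"
      proof (rule inj_onI)
        fix j j' assume j: "j \<in> {0..<9}" "j' \<in> {0..<9}" and e: "?B (i, j) = ?B (i, j')"
        have jj: "j < 9" "j' < 9" "j div 3 < 3" "j' div 3 < 3" using j by auto
        have hi: "i div 3 < 3" using i by simp
        have "R i (j div 3) = R i (j' div 3) \<and> C (i div 3) j = C (i div 3) j'"
          using sym_inj[OF r1[OF i jj(3)] c1[OF jj(1) hi] r1[OF i jj(4)] c1[OF jj(2) hi]] e bv i jj i by simp
        then have q: "j div 3 = j' div 3" and cc: "C (i div 3) (3 * (j div 3) + j mod 3) = C (i div 3) (3 * (j div 3) + j' mod 3)"
          using r2[OF i jj(3,4)] dm[of j] dm[of j'] by auto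
        have "j mod 3 = j' mod 3" using c3[OF jj(3) _ _ _ cc] i by simp
        then show "j = j'" using q dm[of j] dm[of j'] by metis
      qed
    qed (simp add: bl)
  next
    fix j :: nat assume j: "j < 9"
    show "(\<lambda>i. ?B (i, j)) ` {0..<9} = {0..<9}"
    proof (rule img9)
      show "inj_on (\<lambda>i. ?B (i, j)) {0..<9}"
      proof (rule inj_onI)
        fix i i' assume ii: "i \<in> {0..<9}" "i' \<in> {0..<9}" and e: "?B (i, j) = ?B (i', j)"
        have hh: "i < 9" "i' < 9" "i div 3 < 3" "i' div 3 < 3" "j div 3 < 3" using ii j by auto
        have "R i (j div 3) = R i' (j div 3) \<and> C (i div 3) j = C (i' div 3) j"
          using sym_inj[OF r1[OF hh(1,5)] c1[OF j hh(3)] r1[OF hh(2,5)] c1[OF j hh(4)]] e bv hh j by simp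
        then have q: "i div 3 = i' div 3" and rr: "R (3 * (i div 3) + i mod 3) (j div 3) = R (3 * (i div 3) + i' mod 3) (j div 3)"
          using c2[OF j hh(3,4)] dm[of i] dm[of i'] by auto
        have "i mod 3 = i' mod 3" using r3[OF hh(3) _ _ hh(5) rr] by simp
        then show "i = i'" using q dm[of i] dm[of i'] by metis
      qed
    qed (simp add: bl)
  next
    fix bi bj :: nat assume b: "bi < 3" "bj < 3"
    let ?f = "\<lambda>(r, c). ?B (3 * bi + r, 3 * bj + c)"
    have inj: "inj_on ?f ({0..<3} \<times> {0..<3})"
    proof (rule inj_onI)
      fix x y assume x: "x \<in> {0..<3} \<times> {0..<3}" and y: "y \<in> {0..<3} \<times> {0..<3}" and e0: "?f x = ?f y"
      obtain r c where xr: "x = (r, c)" by (cases x)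
      obtain r' c' where yr: "y = (r', c')" by (cases y)
      have h: "r < 3" "c < 3" "r' < 3" "c' < 3" using x y xr yr by auto
      have e: "?B (3 * bi + r, 3 * bj + c) = ?B (3 * bi + r', 3 * bj + c')" using e0 xr yr by simp
      have l: "3 * bi + r < 9" "3 * bj + c < 9" "3 * bi + r' < 9" "3 * bj + c' < 9" using h b by auto
      have "R (3 * bi + r) bj = R (3 * bi + r') bj \<and> C bi (3 * bj + c) = C bi (3 * bj + c')"
        using sym_inj[OF r1[OF l(1) b(2)] c1[OF l(2) b(1)] r1[OF l(3) b(2)] c1[OF l(4) b(1)]] e bv[OF l(1,2)] bv[OF l(3,4)] b h
        by (simp add: dm3)
      then show "x = y" using r3[OF b(1) h(1,3) b(2)] c3[OF b(2) h(2,4) b(1)] xr yr by auto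
    qed
    have "card (?f ` ({0..<3} \<times> {0..<3})) = 9" using card_image[OF inj] by simp
    moreover have "?f ` ({0..<3} \<times> {0..<3}) \<subseteq> {0..<9}" using bl by auto
    ultimately show "?f ` ({0..<3} \<times> {0..<3}) = {0..<9}" by (intro card_subset_eq) auto
  qed
  have rows: "(\<Sum>c<3. ?B (3 * bi + r, 3 * bj + c)) = 12" if h: "bi < 3" "bj < 3" "r < 3" for bi bj r
  proof -
    have l: "3 * bi + r < 9" using h by simp
    have lc: "3 * bj + c < 9" if "c < 3" for c using h that by simp
    let ?a = "R (3 * bi + r) bj"
    have "(\<Sum>c<3. ?B (3 * bi + r, 3 * bj + c)) = (\<Sum>c<3. symb ?a (C bi (3 * bj + c)))"
      using bv[OF l lc] h by (simp add: sum3 dm3)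
    also have "\<dots> = symb ?a (C bi (3 * bj + 0)) + symb ?a (C bi (3 * bj + 1)) + symb ?a (C bi (3 * bj + 2))"
      by (simp add: sum3)
    also have "\<dots> = symb ?a 0 + symb ?a 1 + symb ?a 2"
    proof (rule perm_sum3)
      show "C bi (3 * bj + 0) < 3" "C bi (3 * bj + 1) < 3" "C bi (3 * bj + 2) < 3" by (intro c1; use h in simp)+
      show "C bi (3 * bj + 0) \<noteq> C bi (3 * bj + 1)" "C bi (3 * bj + 1) \<noteq> C bi (3 * bj + 2)" "C bi (3 * bj + 0) \<noteq> C bi (3 * bj + 2)"
        using c3[OF h(2), of 0 1 bi] c3[OF h(2), of 1 2 bi] c3[OF h(2), of 0 2 bi] h by auto
    qed
    also have "\<dots> = 12" using sym_row r1[OF l h(2)] by simp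
    finally show ?thesis .
  qed
  have cols: "(\<Sum>r<3. ?B (3 * bi + r, 3 * bj + c)) = 12" if h: "bi < 3" "bj < 3" "c < 3" for bi bj c
  proof -
    have l: "3 * bj + c < 9" using h by simp
    have lr: "3 * bi + r < 9" if "r < 3" for r using h that by simp
    let ?a = "C bi (3 * bj + c)"
    have "(\<Sum>r<3. ?B (3 * bi + r, 3 * bj + c)) = (\<Sum>r<3. symb (R (3 * bi + r) bj) ?a)"
      using bv[OF lr l] h by (simp add: sum3 dm3)
    also have "\<dots> = symb (R (3 * bi + 0) bj) ?a + symb (R (3 * bi + 1) bj) ?a + symb (R (3 * bi + 2) bj) ?a"
      by (simp add: sum3)
    also have "\<dots> = symb 0 ?a + symb 1 ?a + symb 2 ?a"
    proof (rule perm_sum3[where f = "\<lambda>x. symb x ?a"])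
      show "R (3 * bi + 0) bj < 3" "R (3 * bi + 1) bj < 3" "R (3 * bi + 2) bj < 3" by (intro r1; use h in simp)+
      show "R (3 * bi + 0) bj \<noteq> R (3 * bi + 1) bj" "R (3 * bi + 1) bj \<noteq> R (3 * bi + 2) bj" "R (3 * bi + 0) bj \<noteq> R (3 * bi + 2) bj"
        using r3[OF h(1), of 0 1 bj] r3[OF h(1), of 1 2 bj] r3[OF h(1), of 0 2 bj] h by auto
    qed
    also have "\<dots> = 12" using sym_col c1[OF l h(1)] by simp
    finally show ?thesis .
  qed
  show ?thesis unfolding semimagic_def using sud rows cols by blast
qed

definition bs where "bs B b r p = (\<lambda>c. B (3*b+r, 3*p+c)) ` {0..<3::nat}"
definition cs where "cs B p c b = (\<lambda>r. B (3*b+r, 3*p+c)) ` {0..<3::nat}"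
definition BA where "BA B \<longleftrightarrow> (\<forall>b<3. \<forall>b'<3. \<forall>r<3. \<exists>r'<3. \<forall>p<3. bs B b r p = bs B b' r' p)"
definition PA where "PA B \<longleftrightarrow> (\<forall>p<3. \<forall>p'<3. \<forall>c<3. \<exists>c'<3. \<forall>b<3. cs B p c b = cs B p' c' b)"
definition inv9 :: "(nat \<times> nat \<Rightarrow> nat) \<Rightarrow> nat" where
  "inv9 B = (if BA B then 1 else 0) + (if PA B then 1 else 0)"

lemma bs_cong: "(\<And>c. c \<in> cells \<Longrightarrow> B c = B' c) \<Longrightarrow> b < 3 \<Longrightarrow> r < 3 \<Longrightarrow> p < 3 \<Longrightarrow> bs B b r p = bs B' b r p"
  unfolding bs_def by (intro image_cong) auto
lemma cs_cong: "(\<And>c. c \<in> cells \<Longrightarrow> B c = B' c) \<Longrightarrow> b < 3 \<Longrightarrow> c < 3 \<Longrightarrow> p < 3 \<Longrightarrow> cs B p c b = cs B' p c b"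
  unfolding cs_def by (intro image_cong) auto

lemma inv_cong: assumes "\<And>c. c \<in> cells \<Longrightarrow> B c = B' c" shows "inv9 B = inv9 B'"
proof -
  have "BA B = BA B'" unfolding BA_def by (simp add: bs_cong[OF assms] cong: conj_cong)
  moreover have "PA B = PA B'" unfolding PA_def by (simp add: cs_cong[OF assms] cong: conj_cong)
  ultimately show ?thesis by (simp add: inv9_def)
qed

lemma img_perm: "q permutes {0..<3} \<Longrightarrow> (\<lambda>x. f (q x)) ` {0..<3::nat} = f ` {0..<3}"
  using permutes_image[of q "{0..<3::nat}"] by (metis image_image)

lemma perm_surj3: "q permutes {0..<3} \<Longrightarrow> y < 3 \<Longrightarrow> \<exists>x<3. q x = (y::nat)"
  using permutes_image[of q "{0..<3::nat}"] by (metis atLeastLessThan_iff image_iff zero_le)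

lemma dmv: "b < 3 \<Longrightarrow> r < 3 \<Longrightarrow> (3*b+r) div 3 = b \<and> (3*b+r) mod 3 = r \<and> 3*b+r < (9::nat)"
  by (simp add: dm3)

definition Ag :: "(nat \<Rightarrow> nat \<Rightarrow> nat \<Rightarrow> 'a) \<Rightarrow> bool" where
  "Ag X \<longleftrightarrow> (\<forall>b<3. \<forall>b'<3. \<forall>r<3. \<exists>r'<3. \<forall>p<3. X b r p = X b' r' p)"

lemma BA_Ag: "BA B = Ag (bs B)" unfolding BA_def Ag_def ..
lemma PA_Ag: "PA B = Ag (cs B)" unfolding PA_def Ag_def ..

lemma Ag_band: assumes A: "Ag X" and f: "\<And>x. x < 3 \<Longrightarrow> f x < 3"
  and Y: "\<And>x r p. x < 3 \<Longrightarrow> r < 3 \<Longrightarrow> p < 3 \<Longrightarrow> Y x r p = X (f x) r p"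
  shows "Ag Y"
  unfolding Ag_def
proof (intro allI impI)
  fix x x' r :: nat assume h: "x < 3" "x' < 3" "r < 3"
  obtain r' where r': "r' < 3" "\<forall>p<3. X (f x) r p = X (f x') r' p"
    using A f[OF h(1)] f[OF h(2)] h(3) unfolding Ag_def by blast
  show "\<exists>r'<3. \<forall>p<3. Y x r p = Y x' r' p"
    by (rule exI[of _ r']) (use r' h Y in auto)
qed

lemma Ag_row: assumes A: "Ag X" and \<rho>: "\<And>x. x < 3 \<Longrightarrow> \<rho> x permutes {0..<3}"
  and Y: "\<And>x r p. x < 3 \<Longrightarrow> r < 3 \<Longrightarrow> p < 3 \<Longrightarrow> Y x r p = X x (\<rho> x r) p"
  shows "Ag Y"
  unfolding Ag_def
proof (intro allI impI)
  fix x x' r :: nat assume h: "x < 3" "x' < 3" "r < 3"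
  obtain r'' where r'': "r'' < 3" "\<forall>p<3. X x (\<rho> x r) p = X x' r'' p"
    using A h perm3_lt[OF \<rho>[OF h(1)] h(3)] unfolding Ag_def by blast
  obtain r' where r': "r' < 3" "\<rho> x' r' = r''" using perm_surj3[OF \<rho>[OF h(2)] r''(1)] by blast
  show "\<exists>r'<3. \<forall>p<3. Y x r p = Y x' r' p"
    by (rule exI[of _ r']) (use r' r'' h Y in auto)
qed

lemma Ag_pil: assumes A: "Ag X" and f: "\<And>x. x < 3 \<Longrightarrow> f x < 3"
  and Y: "\<And>x r p. x < 3 \<Longrightarrow> r < 3 \<Longrightarrow> p < 3 \<Longrightarrow> Y x r p = X x r (f p)"
  shows "Ag Y"
  unfolding Ag_def
proof (intro allI impI)
  fix x x' r :: nat assume h: "x < 3" "x' < 3" "r < 3"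
  obtain r' where r': "r' < 3" "\<forall>p<3. X x r p = X x' r' p"
    using A h unfolding Ag_def by blast
  show "\<exists>r'<3. \<forall>p<3. Y x r p = Y x' r' p"
    by (rule exI[of _ r']) (use r' h Y f in auto)
qed

lemma Ag_same: assumes Y: "\<And>x r p. x < 3 \<Longrightarrow> r < 3 \<Longrightarrow> p < 3 \<Longrightarrow> Y x r p = X x r p"
  shows "Ag Y = Ag X"
  unfolding Ag_def by (simp add: Y cong: conj_cong)

lemma gen_mono: assumes g: "g \<in> H9_gens" shows "inv9 B \<le> inv9 (move g B)"
proof -
  consider (b) P where "g = band_perm P" "P permutes {0..<3}"
    | (r) b0 q where "g = row_perm b0 q" "b0 < 3" "q permutes {0..<3}"
    | (p) P where "g = pillar_perm P" "P permutes {0..<3}"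
    | (c) b0 q where "g = col_perm b0 q" "b0 < 3" "q permutes {0..<3}"
    | (t) "g = transpose_cells"
    using g unfolding H9_gens_def by blast
  then show ?thesis
  proof cases
    case b
    have P3: "P x < 3" if "x < 3" for x using perm3_lt[OF b(2) that] .
    have bsv: "bs (move g B) x r p = bs B (P x) r p" if "x < 3" "r < 3" "p < 3" for x r p
      unfolding bs_def using that P3[OF that(1)]
      by (intro image_cong) (auto simp: b(1) move_def band_perm_def dm3)
    have csv: "cs (move g B) p c x = cs B p c (P x)" if "x < 3" "c < 3" "p < 3" for x c p
      unfolding cs_def using that P3[OF that(1)]
      by (intro image_cong) (auto simp: b(1) move_def band_perm_def dm3)
    have "BA B \<Longrightarrow> BA (move g B)" unfolding BA_Ag by (rule Ag_band[where X="bs B" and Y="bs (move g B)" and f=P, OF _ P3 bsv])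
    moreover have "PA B \<Longrightarrow> PA (move g B)" unfolding PA_Ag by (rule Ag_pil[where X="cs B" and Y="cs (move g B)" and f=P, OF _ P3 csv])
    ultimately show ?thesis by (auto simp: inv9_def)
  next
    case r
    define \<rho> where "\<rho> x = (if x = b0 then q else id)" for x
    have rp: "\<rho> x permutes {0..<3}" for x using r(3) by (simp add: \<rho>_def)
    have bsv: "bs (move g B) x k p = bs B x (\<rho> x k) p" if "x < 3" "k < 3" "p < 3" for x k p
      unfolding bs_def using that perm3_lt[OF r(3) that(2)]
      by (intro image_cong) (auto simp: r(1) move_def row_perm_def dm3 \<rho>_def)
    have csv: "cs (move g B) p c x = cs B p c x" if "x < 3" "c < 3" "p < 3" for x c p
    proof -
      have "cs (move g B) p c x = (\<lambda>k. B (3*x+k, 3*p+c)) ` ((\<rho> x) ` {0..<3})"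
        unfolding cs_def image_image using that perm3_lt[OF r(3)]
        by (intro image_cong) (auto simp: r(1) move_def row_perm_def dm3 \<rho>_def)
      then show ?thesis using permutes_image[OF rp] by (simp add: cs_def)
    qed
    have "BA B \<Longrightarrow> BA (move g B)" unfolding BA_Ag by (rule Ag_row[where X="bs B" and Y="bs (move g B)" and \<rho>=\<rho>, OF _ rp bsv])
    moreover have "PA B \<Longrightarrow> PA (move g B)" unfolding PA_Ag using Ag_same[of "cs (move g B)" "cs B"] csv by blast
    ultimately show ?thesis by (auto simp: inv9_def)
  next
    case p
    have P3: "P x < 3" if "x < 3" for x using perm3_lt[OF p(2) that] .
    have bsv: "bs (move g B) x r y = bs B x r (P y)" if "x < 3" "r < 3" "y < 3" for x r y
      unfolding bs_def using that P3[OF that(3)]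
      by (intro image_cong) (auto simp: p(1) move_def pillar_perm_def dm3)
    have csv: "cs (move g B) y c x = cs B (P y) c x" if "y < 3" "c < 3" "x < 3" for x c y
      unfolding cs_def using that P3[OF that(1)]
      by (intro image_cong) (auto simp: p(1) move_def pillar_perm_def dm3)
    have "BA B \<Longrightarrow> BA (move g B)" unfolding BA_Ag by (rule Ag_pil[where X="bs B" and Y="bs (move g B)" and f=P, OF _ P3 bsv])
    moreover have "PA B \<Longrightarrow> PA (move g B)" unfolding PA_Ag by (rule Ag_band[where X="cs B" and Y="cs (move g B)" and f=P, OF _ P3 csv])
    ultimately show ?thesis by (auto simp: inv9_def)
  next
    case c
    define \<rho> where "\<rho> x = (if x = b0 then q else id)" for x
    have rp: "\<rho> x permutes {0..<3}" for x using c(3) by (simp add: \<rho>_def)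
    have csv: "cs (move g B) y k x = cs B y (\<rho> y k) x" if "y < 3" "k < 3" "x < 3" for x k y
      unfolding cs_def using that perm3_lt[OF c(3) that(2)]
      by (intro image_cong) (auto simp: c(1) move_def col_perm_def dm3 \<rho>_def)
    have bsv: "bs (move g B) x r y = bs B x r y" if "x < 3" "r < 3" "y < 3" for x r y
    proof -
      have "bs (move g B) x r y = (\<lambda>k. B (3*x+r, 3*y+k)) ` ((\<rho> y) ` {0..<3})"
        unfolding bs_def image_image using that perm3_lt[OF c(3)]
        by (intro image_cong) (auto simp: c(1) move_def col_perm_def dm3 \<rho>_def)
      then show ?thesis using permutes_image[OF rp] by (simp add: bs_def)
    qed
    have "PA B \<Longrightarrow> PA (move g B)" unfolding PA_Ag by (rule Ag_row[where X="cs B" and Y="cs (move g B)" and \<rho>=\<rho>, OF _ rp csv])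
    moreover have "BA B \<Longrightarrow> BA (move g B)" unfolding BA_Ag using Ag_same[of "bs (move g B)" "bs B"] bsv by blast
    ultimately show ?thesis by (auto simp: inv9_def)
  next
    case t
    have bsv: "bs (move g B) x r y = cs B x r y" if "x < 3" "r < 3" "y < 3" for x r y
      unfolding bs_def cs_def using that
      by (intro image_cong) (auto simp: t move_def transpose_cells_def)
    have csv: "cs (move g B) y c x = bs B y c x" if "y < 3" "c < 3" "x < 3" for x c y
      unfolding bs_def cs_def using that
      by (intro image_cong) (auto simp: t move_def transpose_cells_def)
    have "BA (move g B) = PA B" unfolding BA_Ag PA_Ag by (rule Ag_same[where X="cs B" and Y="bs (move g B)", OF bsv])
    moreover have "PA (move g B) = BA B" unfolding BA_Ag PA_Ag by (rule Ag_same[where X="bs B" and Y="cs (move g B)", OF csv])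
    ultimately show ?thesis by (auto simp: inv9_def)
  qed
qed

lemma gen_inv9: assumes g: "g \<in> H9_gens" shows "inv9 (move g B) = inv9 B"
proof -
  obtain g' where g': "g' \<in> H9_gens" "\<forall>c\<in>cells. g (g' c) = c" using gens_inv[OF g] by blast
  have "inv9 (move g' (move g B)) = inv9 B"
    by (rule inv_cong) (use g' gens_cells[OF g'(1)] in \<open>simp add: move_def\<close>)
  then show ?thesis using gen_mono[OF g, of B] gen_mono[OF g'(1), of "move g B"] by simp
qed

lemma H9_inv9: "\<sigma> \<in> H9 \<Longrightarrow> inv9 (move \<sigma> B) = inv9 B"
proof (induction arbitrary: B rule: H9.induct)
  case H9_id
  show ?case by (rule inv_cong) (simp add: move_def)
next
  case (H9_step g h)
  have e: "move (g \<circ> h) B = move h (move g B)"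
    using move_move[of h g B] H9_cells[OF H9_step(2)] by simp
  show ?case unfolding e using H9_step.IH[of "move g B"] gen_inv9[OF H9_step(1), of B] by simp
qed

lemma Ag_inj: assumes S: "\<And>x r p. x < 3 \<Longrightarrow> r < 3 \<Longrightarrow> p < 3 \<Longrightarrow> X x r p \<subseteq> S" and inj: "inj_on \<pi> S"
  shows "Ag (\<lambda>x r p. \<pi> ` X x r p) = Ag X"
proof -
  have e: "(\<pi> ` X x r p = \<pi> ` X x' r' p) = (X x r p = X x' r' p)"
    if "x < 3" "r < 3" "x' < 3" "r' < 3" "p < 3" for x r x' r' p
    using inj_on_image_eq_iff[OF inj S[OF that(1,2,5)] S[OF that(3,4,5)]] .
  show ?thesis unfolding Ag_def by (simp add: e cong: conj_cong)
qed

lemma relabel_inv9: assumes p: "inj_on \<pi> {0..<9}" and v: "\<And>c. c \<in> cells \<Longrightarrow> B c < 9"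
  shows "inv9 (relabel \<pi> B) = inv9 B"
proof -
  have bsv: "bs (relabel \<pi> B) b r p = \<pi> ` bs B b r p" if "b < 3" "r < 3" "p < 3" for b r p
    unfolding bs_def using that by (auto simp: relabel_def image_image intro!: image_cong)
  have csv: "cs (relabel \<pi> B) p c b = \<pi> ` cs B p c b" if "p < 3" "c < 3" "b < 3" for b c p
    unfolding cs_def using that by (auto simp: relabel_def image_image intro!: image_cong)
  have bsl: "bs B b r p \<subseteq> {0..<9}" if "b < 3" "r < 3" "p < 3" for b r p
    unfolding bs_def using that v by auto
  have csl: "cs B p c b \<subseteq> {0..<9}" if "p < 3" "c < 3" "b < 3" for b c p
    unfolding cs_def using that v by auto
  have "BA (relabel \<pi> B) = BA B"
    unfolding BA_Ag using Ag_same[where Y = "bs (relabel \<pi> B)" and X = "\<lambda>x r p. \<pi> ` bs B x r p", OF bsv]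
      Ag_inj[where X = "bs B", OF bsl p] by simp
  moreover have "PA (relabel \<pi> B) = PA B"
    unfolding PA_Ag using Ag_same[where Y = "cs (relabel \<pi> B)" and X = "\<lambda>x r p. \<pi> ` cs B x r p", OF csv]
      Ag_inj[where X = "cs B", OF csl p] by simp
  ultimately show ?thesis by (simp add: inv9_def)
qed

lemma orbit_inv9: assumes w: "wfb B" and x: "X \<in> G_sm_orbit B" shows "inv9 X = inv9 B"
proof -
  obtain \<sigma> \<pi> where X: "X = relabel \<pi> (move \<sigma> B)" "\<sigma> \<in> H9" "\<pi> \<in> S_sm"
    using x unfolding G_sm_orbit_def by blast
  have inj: "inj_on \<pi> {0..<9}" using X(3) unfolding S_sm_def by (auto dest: permutes_inj_on)
  have "inv9 X = inv9 (move \<sigma> B)"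
    unfolding X(1) by (rule relabel_inv9[OF inj]) (use wfD[OF w] in \<open>simp add: move_def\<close>)
  then show ?thesis using H9_inv9[OF X(2)] by simp
qed

lemma ex3: "(\<exists>x<3. P x) \<longleftrightarrow> P 0 \<or> P 1 \<or> P (2::nat)"
proof
  assume "\<exists>x<3. P x" then obtain x where "x < 3" "P x" by blast
  then show "P 0 \<or> P 1 \<or> P 2" using less3_cases[of x] by auto
next
  assume "P 0 \<or> P 1 \<or> P 2"
  moreover have "(0::nat) < 3" "(1::nat) < 3" "(2::nat) < 3" by simp_all
  ultimately show "\<exists>x<3. P x" by blast
qed

lemma img3: "inj_on f {0..<3} \<Longrightarrow> (\<And>x. x < 3 \<Longrightarrow> f x < (3::nat)) \<Longrightarrow> f ` {0..<3::nat} = {0..<3}"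
  by (rule endo_inj_surj) auto

lemma symimg1: "a < 3 \<Longrightarrow> a' < 3 \<Longrightarrow> (symb a ` {0..<3} = symb a' ` {0..<3}) = (a = a')"
proof
  assume h: "a < 3" "a' < 3" "symb a ` {0..<3} = symb a' ` {0..<3}"
  have "symb a 0 \<in> symb a ` {0..<3}" by (rule imageI) simp
  then have "symb a 0 \<in> symb a' ` {0..<3}" using h(3) by simp
  then obtain x where x0: "x \<in> {0..<3}" "symb a 0 = symb a' x" by blast
  then have x: "x < 3" "symb a 0 = symb a' x" by simp_all
  then have "d1 (symb a 0) = d1 (symb a' x)" by simp
  then show "a = a'" using sym_d[OF h(1), of 0] sym_d[OF h(2) x(1)] by simp
qed simp

lemma symimg2: "a < 3 \<Longrightarrow> a' < 3 \<Longrightarrow> ((\<lambda>x. symb x a) ` {0..<3} = (\<lambda>x. symb x a') ` {0..<3}) = (a = a')"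
proof
  assume h: "a < 3" "a' < 3" "(\<lambda>x. symb x a) ` {0..<3} = (\<lambda>x. symb x a') ` {0..<3}"
  have "symb 0 a \<in> (\<lambda>x. symb x a) ` {0..<3}" by (rule image_eqI[of _ _ 0]) simp_all
  then have "symb 0 a \<in> (\<lambda>x. symb x a') ` {0..<3}" using h(3) by simp
  then obtain x where x0: "x \<in> {0..<3}" "symb 0 a = symb x a'" by blast
  then have x: "x < 3" "symb 0 a = symb x a'" by simp_all
  then have "d2 (symb 0 a) = d2 (symb x a')" by simp
  then show "a = a'" using sym_d[OF _ h(1), of 0] sym_d[OF x(1) h(2)] by simp
qed simp

lemma BA_board: assumes R: "LatR R" and C: "LatC C"
  shows "BA (board R C) = Ag (\<lambda>b r p. R (3*b+r) p)"
proof -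
  have C': "LatR (\<lambda>i p. C p i)" using C by (simp add: LatC_def)
  note r1 = LatR_D(1)[OF R] and c1 = LatR_D(1)[OF C'] and c3 = LatR_D(3)[OF C']
  have bsv: "bs (board R C) b r p = symb (R (3*b+r) p) ` {0..<3}" if h: "b < 3" "r < 3" "p < 3" for b r p
  proof -
    have l: "3*b+r < 9" using h by simp
    have "bs (board R C) b r p = symb (R (3*b+r) p) ` ((\<lambda>c. C b (3*p+c)) ` {0..<3})"
      unfolding bs_def image_image using h r1[OF l h(3)] c1
      by (intro image_cong) (auto simp: board_def dm3)
    also have "(\<lambda>c. C b (3*p+c)) ` {0..<3} = {0..<3}"
    proof (rule img3)
      show "inj_on (\<lambda>c. C b (3 * p + c)) {0..<3}" using c3[OF h(3) _ _ h(1)] by (auto intro: inj_onI)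
      show "C b (3 * p + x) < 3" if "x < 3" for x using c1[of "3*p+x" b] that h by simp
    qed
    finally show ?thesis .
  qed
  have "BA (board R C) = Ag (\<lambda>b r p. symb (R (3*b+r) p) ` {0..<3})"
    unfolding BA_Ag by (rule Ag_same) (rule bsv)
  also have "\<dots> = Ag (\<lambda>b r p. R (3*b+r) p)"
  proof -
    have e: "(symb (R (3*b+r) p) ` {0..<3} = symb (R (3*b'+r') p) ` {0..<3}) = (R (3*b+r) p = R (3*b'+r') p)"
      if "b < 3" "r < 3" "b' < 3" "r' < 3" "p < 3" for b r b' r' p
      by (rule symimg1) (use r1 that in auto)
    show ?thesis unfolding Ag_def by (simp add: e cong: conj_cong)
  qed
  finally show ?thesis .
qed

lemma PA_board: assumes R: "LatR R" and C: "LatC C"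
  shows "PA (board R C) = Ag (\<lambda>p c b. C b (3*p+c))"
proof -
  have C': "LatR (\<lambda>i p. C p i)" using C by (simp add: LatC_def)
  note r1 = LatR_D(1)[OF R] and r3 = LatR_D(3)[OF R] and c1 = LatR_D(1)[OF C']
  have csv: "cs (board R C) p c b = (\<lambda>x. symb x (C b (3*p+c))) ` {0..<3}" if h: "p < 3" "c < 3" "b < 3" for b c p
  proof -
    have l: "3*p+c < 9" using h by simp
    have "cs (board R C) p c b = (\<lambda>x. symb x (C b (3*p+c))) ` ((\<lambda>r. R (3*b+r) p) ` {0..<3})"
      unfolding cs_def image_image using h c1[OF l h(3)] r1
      by (intro image_cong) (auto simp: board_def dm3)
    also have "(\<lambda>r. R (3*b+r) p) ` {0..<3} = {0..<3}"
    proof (rule img3)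
      show "inj_on (\<lambda>r. R (3 * b + r) p) {0..<3}" using r3[OF h(3) _ _ h(1)] by (auto intro: inj_onI)
      show "R (3 * b + x) p < 3" if "x < 3" for x using r1[of "3*b+x" p] that h by simp
    qed
    finally show ?thesis .
  qed
  have "PA (board R C) = Ag (\<lambda>p c b. (\<lambda>x. symb x (C b (3*p+c))) ` {0..<3})"
    unfolding PA_Ag by (rule Ag_same) (rule csv)
  also have "\<dots> = Ag (\<lambda>p c b. C b (3*p+c))"
  proof -
    have e: "((\<lambda>x. symb x (C b (3*p+c))) ` {0..<3} = (\<lambda>x. symb x (C b (3*p'+c'))) ` {0..<3}) = (C b (3*p+c) = C b (3*p'+c'))"
      if "p < 3" "c < 3" "p' < 3" "c' < 3" "b < 3" for b c p c' p'
      by (rule symimg2) (use c1 that in auto)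
    show ?thesis unfolding Ag_def by (simp add: e cong: conj_cong)
  qed
  finally show ?thesis .
qed

lemma LatR_N111: "LatR (N (vec 1 1 1))"
  unfolding LatR_def LatB_def all3 by (simp add: N_def vec_def)
lemma LatR_N112: "LatR (N (vec 1 1 2))"
  unfolding LatR_def LatB_def all3 by (simp add: N_def vec_def)

lemma LatC_N': "LatR (N t) \<Longrightarrow> LatC (N' t)"
proof -
  assume "LatR (N t)"
  moreover have "(\<lambda>i p. N' t p i) = N t" by (simp add: fun_eq_iff N'_def)
  ultimately show "LatC (N' t)" by (simp add: LatC_def)
qed

definition rep1 where "rep1 = board (N (vec 1 1 1)) (N' (vec 1 1 1))"
definition rep2 where "rep2 = board (N (vec 1 1 1)) (N' (vec 1 1 2))"
definition rep3 where "rep3 = board (N (vec 1 1 2)) (N' (vec 1 1 2))"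

lemma sm_reps: "semimagic rep1" "semimagic rep2" "semimagic rep3"
  unfolding rep1_def rep2_def rep3_def
  by (rule lat_sm[OF LatR_N111 LatC_N'[OF LatR_N111]], rule lat_sm[OF LatR_N111 LatC_N'[OF LatR_N112]],
      rule lat_sm[OF LatR_N112 LatC_N'[OF LatR_N112]])

lemma O_reps: "O1 = G_sm_orbit rep1" "O2 = G_sm_orbit rep2" "O3 = G_sm_orbit rep3"
  unfolding O1_def O2_def O3_def rep1_def rep2_def rep3_def Ob_def by simp_all

lemma Ag_N111: "Ag (\<lambda>b r p. N (vec 1 1 1) (3*b+r) p)"
  unfolding Ag_def all3 ex3 by (simp add: N_def vec_def)
lemma Ag_N112: "\<not> Ag (\<lambda>b r p. N (vec 1 1 2) (3*b+r) p)"
  unfolding Ag_def all3 ex3 by (simp add: N_def vec_def)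
lemma Ag_N'111: "Ag (\<lambda>p c b. N' (vec 1 1 1) b (3*p+c))"
  unfolding Ag_def all3 ex3 by (simp add: N'_def N_def vec_def)
lemma Ag_N'112: "\<not> Ag (\<lambda>p c b. N' (vec 1 1 2) b (3*p+c))"
  unfolding Ag_def all3 ex3 by (simp add: N'_def N_def vec_def)

lemma inv_reps: "inv9 rep1 = 2" "inv9 rep2 = 1" "inv9 rep3 = 0"
proof -
  have L: "LatR (N (vec 1 1 1))" "LatR (N (vec 1 1 2))" "LatC (N' (vec 1 1 1))" "LatC (N' (vec 1 1 2))"
    using LatR_N111 LatR_N112 LatC_N' by auto
  show "inv9 rep1 = 2" unfolding rep1_def inv9_def BA_board[OF L(1,3)] PA_board[OF L(1,3)]
    using Ag_N111 Ag_N'111 by simp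
  show "inv9 rep2 = 1" unfolding rep2_def inv9_def BA_board[OF L(1,4)] PA_board[OF L(1,4)]
    using Ag_N111 Ag_N'112 by simp
  show "inv9 rep3 = 0" unfolding rep3_def inv9_def BA_board[OF L(2,4)] PA_board[OF L(2,4)]
    using Ag_N112 Ag_N'112 by simp
qed

lemma self_orbit: "wfb B \<Longrightarrow> B \<in> G_sm_orbit B"
proof -
  assume w: "wfb B"
  have "relabel id (move id B) = B" using wfD2[OF w] by (auto simp: relabel_def move_def fun_eq_iff)
  then show ?thesis unfolding G_sm_orbit_def using H9_id id_S_sm by force
qed

lemma orbits_distinct: "G_sm_orbit B = G_sm_orbit B' \<Longrightarrow> wfb B \<Longrightarrow> wfb B' \<Longrightarrow> inv9 B = inv9 B'"
  using self_orbit orbit_inv9 by metis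

lemma classify: assumes sm: "semimagic B" shows "G_sm_orbit B \<in> {O1, O2, O3}"
proof -
  obtain \<pi> R C where h: "\<pi> = id \<or> \<pi> = swp" "relabel \<pi> B = board R C" "LatR R" "LatC C"
    using structureL[OF sm] by blast
  have w: "wfb B" using sud_wf[OF sm_sud[OF sm]] .
  have pS: "\<pi> \<in> S_sm" using h(1) id_S_sm swp_S_sm by blast
  have pi: "\<pi> (\<pi> v) = v" if "v < 9" for v using h(1) swp_inv[OF that] by auto
  have "G_sm_orbit B = G_sm_orbit (relabel \<pi> B)" using orbit_relabel[OF w pS pi] by simp
  also have "\<dots> = Ob R C" using h(2) by (simp add: Ob_def)
  finally have e1: "G_sm_orbit B = Ob R C" .
  obtain s where s: "\<forall>x<3. s x = 1 \<or> s x = 2" "Ob R C = Ob (N s) C" using lemmaB[OF h(3)] by blast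
  obtain t where t: "\<forall>x<3. t x = 1 \<or> t x = 2" "Ob (N s) C = Ob (N s) (N' t)" using lemmaC[OF h(4)] by blast
  show ?thesis using e1 s(2) t(2) table[OF s(1) t(1)] by simp
qed

theorem theorem3p7:
  shows "card (G_sm_orbit ` {B. semimagic B}) = 3"
proof -
  have img: "G_sm_orbit ` {B. semimagic B} = {O1, O2, O3}"
  proof
    show "G_sm_orbit ` {B. semimagic B} \<subseteq> {O1, O2, O3}" using classify by blast
    show "{O1, O2, O3} \<subseteq> G_sm_orbit ` {B. semimagic B}" using O_reps sm_reps by blast
  qed
  have w: "wfb rep1" "wfb rep2" "wfb rep3" unfolding rep1_def rep2_def rep3_def by (simp_all add: wf_board)
  have d: "O1 \<noteq> O2" "O1 \<noteq> O3" "O2 \<noteq> O3"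
    using orbits_distinct[OF _ w(1) w(2)] orbits_distinct[OF _ w(1) w(3)] orbits_distinct[OF _ w(2) w(3)]
      inv_reps O_reps by auto
  show ?thesis unfolding img using d by simp
qed

end
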